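(* If $\varphi$ does not satisfy the appropriate $\Delta_2$-condition, then there exists $f\in\mathcal M_{\varphi,w}$ such that $Q_{\varphi,w}(f)\le1$ but $Q_{\varphi,w}(rf)=\infty$ for every $r>1$. The analogous result holds for $\mathfrak m_{\varphi,w}$ (with $\mathfrak q_{\varphi,w}$).
   Context: Let $I=[0,\gamma)$, $0<\gamma\le\infty$, Lebesgue measure $m$, $L_0$ the measurable functions on $I$, $f^*$ the decreasing rearrangement of $f$. Orlicz function: convex $\varphi:[0,\infty)\to[0,\infty)$, $\varphi(0)=0$, $\varphi(u)>0$ for $u>0$. $\varphi$ satisfies $\Delta_2^0$ if there are $K>2$, $u_0>0$ with $\varphi(2u)\le K\varphi(u)$ for $0\le u\le u_0$; $\Delta_2^\infty$ if there are $K>2$, $u_0\ge0$ with $\varphi(2u)\le K\varphi(u)$ for $u\ge u_0$; $\Delta_2$ if both. The appropriate $\Delta_2$-condition means $\Delta_2^\infty$ if $\gamma<\infty$, $\Delta_2$ if $\gamma=\infty$, and $\Delta_2^0$ for sequence spaces. Weight: positive decreasing locally integrable $w$ on $I$, $W(t)=\int_0^tw$, $W(\infty)=\infty$ if $\gamma=\infty$. Halperin level function $g^0$ of $g\ge0$ w.r.t. $w$: with $G(a,b)=\int_a^bg$, $W(a,b)=\int_a^bw$, $(a,b]$ is a level interval if $G(a,t)/W(a,t)\le G(a,b)/W(a,b)$ for all $t\in(a,b]$, maximal if not contained in another; $g^0=\frac{G(a,b)}{W(a,b)}w$ on each maximal level interval and $g^0=g$ elsewhere. $Q_{\varphi,w}(f)=\int_I\varphi((f^*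 )^0/w)w$ and $\mathcal M_{\varphi,w}=\{f:Q_{\varphi,w}(kf)<\infty\text{ for some }k>0\}$. Sequence analogues ($\mathbb N$, counting measure, decreasing positive weight sequence with $\sum w(i)=\infty$, $\mathfrak q_{\varphi,w}$ given by sums, $\mathfrak m_{\varphi,w}$) are defined the same way. *)

theory Defs
  imports "HOL-Analysis.Analysis"
begin

definition orlicz_fun :: "(real \<Rightarrow> real) \<Rightarrow> bool" where
  "orlicz_fun \<phi> \<longleftrightarrow> convex_on {0..} \<phi> \<and> \<phi> 0 = 0 \<and> (\<forall>u>0. \<phi> u > 0)"

definition Delta2_zero :: "(real \<Rightarrow> real) \<Rightarrow> bool" where
  "Delta2_zero \<phi> \<longleftrightarrow> (\<exists>K>2. \<exists>u0>0. \<forall>u. 0 \<le> u \<and> u \<le> u0 \<longrightarrow> \<phi> (2*u) \<le> K * \<phi> u)"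

definition Delta2_infty :: "(real \<Rightarrow> real) \<Rightarrow> bool" where
  "Delta2_infty \<phi> \<longleftrightarrow> (\<exists>K>2. \<exists>u0\<ge>0. \<forall>u. u \<ge> u0 \<longrightarrow> \<phi> (2*u) \<le> K * \<phi> u)"

definition Delta2 :: "(real \<Rightarrow> real) \<Rightarrow> bool" where
  "Delta2 \<phi> \<longleftrightarrow> Delta2_zero \<phi> \<and> Delta2_infty \<phi>"

definition appr_Delta2 :: "ereal \<Rightarrow> (real \<Rightarrow> real) \<Rightarrow> bool" where
  "appr_Delta2 \<gamma> \<phi> = (if \<gamma> < \<infinity> then Delta2_infty \<phi> else Delta2 \<phi>)"

definition phi_ext :: "(real \<Rightarrow> real) \<Rightarrow> ennreal \<Rightarrow> ennreal" where
  "phi_ext \<phi> u = (if u = top then top else ennreal (\<phi> (enn2real u)))"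

definition Iset :: "ereal \<Rightarrow> real set" where
  "Iset \<gamma> = {x. 0 \<le> x \<and> ereal x < \<gamma>}"

definition weight_fun :: "ereal \<Rightarrow> (real \<Rightarrow> real) \<Rightarrow> bool" where
  "weight_fun \<gamma> w \<longleftrightarrow>
     (\<forall>x\<in>Iset \<gamma>. 0 < w x) \<and>
     (\<forall>x\<in>Iset \<gamma>. \<forall>y\<in>Iset \<gamma>. x \<le> y \<longrightarrow> w y \<le> w x) \<and>
     (\<forall>t\<in>Iset \<gamma>. set_integrable lebesgue {0..t} w) \<and>
     (\<gamma> = \<infinity> \<longrightarrow> (\<integral>\<^sup>+ x\<in>{0..}. ennreal (w x) \<partial>lebesgue) = top)"

definition distr_fun :: "ereal \<Rightarrow> (real \<Rightarrow> real) \<Rightarrow> ennreal \<Rightarrow> ennreal" where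
  "distr_fun \<gamma> f s = emeasure lebesgue {x \<in> Iset \<gamma>. ennreal \<bar>f x\<bar> > s}"

definition drearr :: "ereal \<Rightarrow> (real \<Rightarrow> real) \<Rightarrow> real \<Rightarrow> ennreal" where
  "drearr \<gamma> f t = Inf {s. distr_fun \<gamma> f s \<le> ennreal t}"

definition Gint :: "(real \<Rightarrow> ennreal) \<Rightarrow> real \<Rightarrow> real \<Rightarrow> ennreal" where
  "Gint g a b = (\<integral>\<^sup>+ x\<in>{a<..b}. g x \<partial>lebesgue)"

definition Wint :: "(real \<Rightarrow> real) \<Rightarrow> real \<Rightarrow> real \<Rightarrow> ennreal" where
  "Wint w a b = (\<integral>\<^sup>+ x\<in>{a<..b}. ennreal (w x) \<partial>lebesgue)"

definition level_int :: "ereal \<Rightarrow> (real \<Rightarrow> real) \<Rightarrow> (real \<Rightarrow> ennreal) \<Rightarrow> real \<Rightarrow> real \<Rightarrow> bool" where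
  "level_int \<gamma> w g a b \<longleftrightarrow> 0 \<le> a \<and> a < b \<and> ereal b \<le> \<gamma> \<and>
     (\<forall>t. a < t \<and> t \<le> b \<longrightarrow> Gint g a t / Wint w a t \<le> Gint g a b / Wint w a b)"

definition max_level_int :: "ereal \<Rightarrow> (real \<Rightarrow> real) \<Rightarrow> (real \<Rightarrow> ennreal) \<Rightarrow> real \<Rightarrow> real \<Rightarrow> bool" where
  "max_level_int \<gamma> w g a b \<longleftrightarrow> level_int \<gamma> w g a b \<and>
     \<not> (\<exists>c d. level_int \<gamma> w g c d \<and> {a<..b} \<subset> {c<..d})"

definition level_fun :: "ereal \<Rightarrow> (real \<Rightarrow> real) \<Rightarrow> (real \<Rightarrow> ennreal) \<Rightarrow> real \<Rightarrow> ennreal" where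
  "level_fun \<gamma> w g x =
     (if \<exists>a b. max_level_int \<gamma> w g a b \<and> a < x \<and> x \<le> b
      then (case (SOME p. max_level_int \<gamma> w g (fst p) (snd p) \<and> fst p < x \<and> x \<le> snd p) of
              (a, b) \<Rightarrow> Gint g a b / Wint w a b * ennreal (w x))
      else g x)"

definition Qfun :: "ereal \<Rightarrow> (real \<Rightarrow> real) \<Rightarrow> (real \<Rightarrow> real) \<Rightarrow> (real \<Rightarrow> real) \<Rightarrow> ennreal" where
  "Qfun \<gamma> \<phi> w f = (\<integral>\<^sup>+ x\<in>Iset \<gamma>.
      phi_ext \<phi> (level_fun \<gamma> w (drearr \<gamma> f) x / ennreal (w x)) * ennreal (w x) \<partial>lebesgue)"

definition Mspace :: "ereal \<Rightarrow> (real \<Rightarrow> real) \<Rightarrow> (real \<Rightarrow> real) \<Rightarrow> (real \<Rightarrow> real) set" where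
  "Mspace \<gamma> \<phi> w = {f. f \<in> borel_measurable (restrict_space lebesgue (Iset \<gamma>)) \<and>
       (\<exists>k>0. Qfun \<gamma> \<phi> w (\<lambda>x. k * f x) < top)}"

section \<open>Sequence spaces (indices 0,1,2,... play the role of 1,2,3,...)\<close>

definition weight_seq :: "(nat \<Rightarrow> real) \<Rightarrow> bool" where
  "weight_seq w \<longleftrightarrow> (\<forall>i. 0 < w i) \<and> decseq w \<and> (\<Sum>i. ennreal (w i)) = top"

definition sdrearr :: "(nat \<Rightarrow> real) \<Rightarrow> nat \<Rightarrow> ennreal" where
  "sdrearr f n = Inf {s. emeasure (count_space UNIV) {i. ennreal \<bar>f i\<bar> > s} \<le> of_nat n}"

definition Gsum :: "(nat \<Rightarrow> ennreal) \<Rightarrow> nat \<Rightarrow> nat \<Rightarrow> ennreal" where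
  "Gsum g a b = (\<Sum>i\<in>{a..<b}. g i)"

definition Wsum :: "(nat \<Rightarrow> real) \<Rightarrow> nat \<Rightarrow> nat \<Rightarrow> ennreal" where
  "Wsum w a b = (\<Sum>i\<in>{a..<b}. ennreal (w i))"

text \<open>The index block {a..<b} corresponds to the integer interval (a,b].\<close>
definition slevel_int :: "(nat \<Rightarrow> real) \<Rightarrow> (nat \<Rightarrow> ennreal) \<Rightarrow> nat \<Rightarrow> nat \<Rightarrow> bool" where
  "slevel_int w g a b \<longleftrightarrow> a < b \<and>
     (\<forall>t. a < t \<and> t \<le> b \<longrightarrow> Gsum g a t / Wsum w a t \<le> Gsum g a b / Wsum w a b)"

definition smax_level_int :: "(nat \<Rightarrow> real) \<Rightarrow> (nat \<Rightarrow> ennreal) \<Rightarrow> nat \<Rightarrow> nat \<Rightarrow> bool" where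
  "smax_level_int w g a b \<longleftrightarrow> slevel_int w g a b \<and>
     \<not> (\<exists>c d. slevel_int w g c d \<and> {a..<b} \<subset> {c..<d})"

definition slevel_fun :: "(nat \<Rightarrow> real) \<Rightarrow> (nat \<Rightarrow> ennreal) \<Rightarrow> nat \<Rightarrow> ennreal" where
  "slevel_fun w g i =
     (if \<exists>a b. smax_level_int w g a b \<and> a \<le> i \<and> i < b
      then (case (SOME p. smax_level_int w g (fst p) (snd p) \<and> fst p \<le> i \<and> i < snd p) of
              (a, b) \<Rightarrow> Gsum g a b / Wsum w a b * ennreal (w i))
      else g i)"

definition qseq :: "(real \<Rightarrow> real) \<Rightarrow> (nat \<Rightarrow> real) \<Rightarrow> (nat \<Rightarrow> real) \<Rightarrow> ennreal" where
  "qseq \<phi> w f = (\<Sum>i. phi_ext \<phi> (slevel_fun w (sdrearr f) i / ennreal (w i)) * ennreal (w i))"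

definition mseq :: "(real \<Rightarrow> real) \<Rightarrow> (nat \<Rightarrow> real) \<Rightarrow> (nat \<Rightarrow> real) set" where
  "mseq \<phi> w = {f. \<exists>k>0. qseq \<phi> w (\<lambda>i. k * f i) < top}"

end

theory Submission
  imports Defs
begin
lemma phi_basic:
  assumes "orlicz_fun \<phi>"
  shows "\<phi> 0 = 0" "\<And>u. u > 0 \<Longrightarrow> \<phi> u > 0" "convex_on {0..} \<phi>"
  using assms unfolding orlicz_fun_def by auto

lemma phi_nonneg: assumes "orlicz_fun \<phi>" "u \<ge> 0" shows "\<phi> u \<ge> 0"
  using phi_basic[OF assms(1)] assms(2) by (cases "u = 0") (auto intro: less_imp_le)

lemma phi_scale:
  assumes "orlicz_fun \<phi>" "u \<ge> 0" "0 \<le> l" "l \<le> 1"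
  shows "\<phi> (l * u) \<le> l * \<phi> u"
proof -
  have c: "convex_on {0..} \<phi>" using phi_basic[OF assms(1)] by auto
  have "\<phi> ((1 - l) * 0 + l * u) \<le> (1 - l) * \<phi> 0 + l * \<phi> u"
    using convex_onD[OF c, of l 0 u] assms by auto
  thus ?thesis using phi_basic[OF assms(1)] by simp
qed

lemma phi_mono:
  assumes "orlicz_fun \<phi>" "0 \<le> x" "x \<le> y" shows "\<phi> x \<le> \<phi> y"
proof (cases "x = y")
  case False
  hence y: "y > 0" using assms by auto
  have "\<phi> ((x / y) * y) \<le> (x/y) * \<phi> y"
    using phi_scale[OF assms(1), of y "x/y"] assms y by auto
  also have "\<dots> \<le> \<phi> y"
  proof -
    have "x * \<phi> y \<le> y * \<phi> y" using phi_nonneg[OF assms(1), of y] y assms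
      by (intro mult_right_mono) auto
    thus ?thesis using y by (simp add: divide_le_eq mult.commute)
  qed
  finally show ?thesis using y by simp
qed simp

lemma phi_iter:
  assumes "orlicz_fun \<phi>" "\<rho> > 1" "K > 0"
    and H: "\<And>u. u \<in> S \<Longrightarrow> \<phi> (\<rho> * u) \<le> K * \<phi> u"
    and u: "\<And>j. j < m \<Longrightarrow> \<rho> ^ j * u \<in> S"
  shows "\<phi> (\<rho> ^ m * u) \<le> K ^ m * \<phi> u"
  using u
proof (induction m)
  case 0 then show ?case by simp
next
  case (Suc m)
  have "\<phi> (\<rho> ^ Suc m * u) = \<phi> (\<rho> * (\<rho> ^ m * u))" by (simp add: mult.assoc)
  also have "\<dots> \<le> K * \<phi> (\<rho> ^ m * u)" using H Suc.prems by auto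
  also have "\<dots> \<le> K * (K ^ m * \<phi> u)" using Suc assms(3) by (intro mult_left_mono) auto
  finally show ?case by simp
qed

lemma not_Delta2_zero_D:
  assumes "orlicz_fun \<phi>" "\<not> Delta2_zero \<phi>" "\<rho> > 1" "\<epsilon> > 0"
  shows "\<exists>u. 0 < u \<and> u \<le> \<epsilon> \<and> \<phi> (\<rho> * u) > K * \<phi> u"
proof (rule ccontr)
  assume "\<not> ?thesis"
  hence H0: "\<And>u. 0 < u \<Longrightarrow> u \<le> \<epsilon> \<Longrightarrow> \<phi> (\<rho> * u) \<le> K * \<phi> u" by (auto simp: not_less)
  define K' where "K' = max K 1"
  have K'pos: "K' > 0" by (simp add: K'_def)
  have H: "\<phi> (\<rho> * u) \<le> K' * \<phi> u" if "u \<in> {0<..\<epsilon>}" for u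
  proof -
    have "\<phi> (\<rho> * u) \<le> K * \<phi> u" using H0 that by auto
    also have "\<dots> \<le> K' * \<phi> u" using phi_nonneg[OF assms(1), of u] that
      by (intro mult_right_mono) (auto simp: K'_def)
    finally show ?thesis .
  qed
  obtain m where m: "2 < \<rho> ^ m" using real_arch_pow[OF assms(3)] by blast
  have rm: "\<rho> ^ m > 0" using assms(3) by simp
  define u0 where "u0 = \<epsilon> / \<rho> ^ m"
  have u0: "u0 > 0" using assms rm by (simp add: u0_def)
  have "Delta2_zero \<phi>"
    unfolding Delta2_zero_def
  proof (intro exI conjI allI impI)
    show "2 < max 3 (K' ^ m)" by simp
    show "u0 > 0" by fact
    fix u assume u: "0 \<le> u \<and> u \<le> u0"
    show "\<phi> (2 * u) \<le> max 3 (K' ^ m) * \<phi> u"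
    proof (cases "u = 0")
      case True then show ?thesis using phi_basic[OF assms(1)] by simp
    next
      case False
      hence upos: "u > 0" using u by auto
      have "\<phi> (2 * u) \<le> \<phi> (\<rho> ^ m * u)"
        using m upos by (intro phi_mono[OF assms(1)]) auto
      also have "\<dots> \<le> K' ^ m * \<phi> u"
      proof (rule phi_iter[OF assms(1) assms(3) K'pos H])
        fix j assume j: "j < m"
        have "\<rho> ^ j \<le> \<rho> ^ m" using j assms(3) by (intro power_increasing) auto
        hence "\<rho> ^ j * u \<le> \<rho> ^ m * u0" using u upos u0 rm by (intro mult_mono) auto
        also have "\<dots> = \<epsilon>" using rm assms(3) by (simp add: u0_def)
        finally show "\<rho> ^ j * u \<in> {0<..\<epsilon>}" using upos assms(3) by auto
      qed
      also have "\<dots> \<le> max 3 (K' ^ m) * \<phi> u" using phi_nonneg[OF assms(1), of u] upos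
        by (intro mult_right_mono) auto
      finally show ?thesis .
    qed
  qed
  thus False using assms(2) by simp
qed

lemma not_Delta2_infty_D:
  assumes "orlicz_fun \<phi>" "\<not> Delta2_infty \<phi>" "\<rho> > 1"
  shows "\<exists>u. M \<le> u \<and> 0 < u \<and> \<phi> (\<rho> * u) > K * \<phi> u"
proof (rule ccontr)
  assume "\<not> ?thesis"
  hence H0: "\<And>u. max M 1 \<le> u \<Longrightarrow> \<phi> (\<rho> * u) \<le> K * \<phi> u" by (auto simp: not_less)
  define K' where "K' = max K 1"
  have K'pos: "K' > 0" by (simp add: K'_def)
  have H: "\<phi> (\<rho> * u) \<le> K' * \<phi> u" if "u \<in> {max M 1..}" for u
  proof -
    have "\<phi> (\<rho> * u) \<le> K * \<phi> u" using H0 that by auto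
    also have "\<dots> \<le> K' * \<phi> u" using phi_nonneg[OF assms(1), of u] that
      by (intro mult_right_mono) (auto simp: K'_def)
    finally show ?thesis .
  qed
  obtain m where m: "2 < \<rho> ^ m" using real_arch_pow[OF assms(3)] by blast
  have "Delta2_infty \<phi>"
    unfolding Delta2_infty_def
  proof (intro exI conjI allI impI)
    show "2 < max 3 (K' ^ m)" by simp
    show "max M 1 \<ge> 0" by simp
    fix u assume u: "max M 1 \<le> u"
    have upos: "u > 0" using u by auto
    have "\<phi> (2 * u) \<le> \<phi> (\<rho> ^ m * u)"
      using m upos by (intro phi_mono[OF assms(1)]) auto
    also have "\<dots> \<le> K' ^ m * \<phi> u"
    proof (rule phi_iter[OF assms(1) assms(3) K'pos H])
      fix j assume j: "j < m"
      have "1 \<le> \<rho> ^ j" using assms(3) by simp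
      hence m1: "1 * u \<le> \<rho> ^ j * u" using upos by (intro mult_right_mono) auto
      have "M \<le> u" "1 \<le> u" using u by auto
      hence "M \<le> \<rho> ^ j * u" "1 \<le> \<rho> ^ j * u" using m1 by linarith+
      thus "\<rho> ^ j * u \<in> {max M 1..}" by simp
    qed
    also have "\<dots> \<le> max 3 (K' ^ m) * \<phi> u" using phi_nonneg[OF assms(1), of u] upos
      by (intro mult_right_mono) auto
    finally show "\<phi> (2 * u) \<le> max 3 (K' ^ m) * \<phi> u" .
  qed
  thus False using assms(2) by simp
qed

lemma sdrearr_dec:
  assumes nn: "\<And>i. f i \<ge> 0" and dec: "decseq f"
  shows "sdrearr f n = ennreal (f n)"
  unfolding sdrearr_def
proof (rule antisym)
  have sub: "{i. ennreal (f n) < ennreal \<bar>f i\<bar>} \<subseteq> {..<n}"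
  proof
    fix i assume "i \<in> {i. ennreal (f n) < ennreal \<bar>f i\<bar>}"
    hence "f n < f i" using nn[of i] nn[of n] by (auto simp: ennreal_less_iff)
    thus "i \<in> {..<n}" using dec by (metis decseq_def leI lessThan_iff not_less)
  qed
  have "emeasure (count_space UNIV) {i. ennreal (f n) < ennreal \<bar>f i\<bar>} \<le> emeasure (count_space UNIV) {..<n}"
    using sub by (intro emeasure_mono) auto
  also have "\<dots> = of_nat n" by simp
  finally show "Inf {s. emeasure (count_space UNIV) {i. s < ennreal \<bar>f i\<bar>} \<le> of_nat n} \<le> ennreal (f n)"
    by (intro Inf_lower) auto
next
  show "ennreal (f n) \<le> Inf {s. emeasure (count_space UNIV) {i. s < ennreal \<bar>f i\<bar>} \<le> of_nat n}"
  proof (rule Inf_greatest)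
    fix s assume s: "s \<in> {s. emeasure (count_space UNIV) {i. s < ennreal \<bar>f i\<bar>} \<le> of_nat n}"
    show "ennreal (f n) \<le> s"
    proof (rule ccontr)
      assume "\<not> ennreal (f n) \<le> s"
      hence lt: "s < ennreal (f n)" by simp
      have sub: "{..n} \<subseteq> {i. s < ennreal \<bar>f i\<bar>}"
      proof
        fix i assume "i \<in> {..n}"
        hence "f n \<le> f i" using dec by (auto simp: decseq_def)
        hence "ennreal (f n) \<le> ennreal \<bar>f i\<bar>" using nn[of i] by (auto intro: ennreal_leI)
        thus "i \<in> {i. s < ennreal \<bar>f i\<bar>}" using lt by (metis less_le_trans mem_Collect_eq)
      qed
      have "of_nat (Suc n) = emeasure (count_space UNIV) {..n}" by simp
      also have "\<dots> \<le> emeasure (count_space UNIV) {i. s < ennreal \<bar>f i\<bar>}"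
        using sub by (intro emeasure_mono) auto
      also have "\<dots> \<le> of_nat n" using s by simp
      finally show False by simp
    qed
  qed
qed

lemma slevel_int_const:
  assumes wpos: "\<And>i. w i > 0" and hnn: "\<And>i. h i \<ge> 0" and dec: "decseq h"
    and L: "slevel_int w (\<lambda>i. ennreal (h i * w i)) a b"
  shows "(\<forall>j. a \<le> j \<and> j < b \<longrightarrow> h j = h a) \<and>
         Gsum (\<lambda>i. ennreal (h i * w i)) a b / Wsum w a b = ennreal (h a)"
proof -
  have ab: "a < b" using L by (simp add: slevel_int_def)
  define GG where "GG t = (\<Sum>i\<in>{a..<t}. h i * w i)" for t
  define WW where "WW t = (\<Sum>i\<in>{a..<t}. w i)" for t
  have WWpos: "WW t > 0" if "a < t" for t
    unfolding WW_def using that wpos by (intro sum_pos) auto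
  have wnn: "\<And>i. 0 \<le> w i" using wpos by (simp add: less_imp_le)
  have hw: "\<And>i. 0 \<le> h i * w i" using hnn wnn by simp
  have GGnn: "GG t \<ge> 0" for t unfolding GG_def using hw by (intro sum_nonneg) auto
  have ratio: "Gsum (\<lambda>i. ennreal (h i * w i)) a t / Wsum w a t = ennreal (GG t / WW t)" if "a < t" for t
  proof -
    have "Gsum (\<lambda>i. ennreal (h i * w i)) a t = ennreal (GG t)"
      unfolding Gsum_def GG_def using hw by simp
    moreover have "Wsum w a t = ennreal (WW t)"
      unfolding Wsum_def WW_def using wnn by simp
    ultimately show ?thesis using divide_ennreal[OF GGnn WWpos[OF that]] by simp
  qed
  have "Gsum (\<lambda>i. ennreal (h i * w i)) a (Suc a) / Wsum w a (Suc a)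
        \<le> Gsum (\<lambda>i. ennreal (h i * w i)) a b / Wsum w a b"
  proof -
    have "\<forall>t. a < t \<and> t \<le> b \<longrightarrow> Gsum (\<lambda>i. ennreal (h i * w i)) a t / Wsum w a t
        \<le> Gsum (\<lambda>i. ennreal (h i * w i)) a b / Wsum w a b"
      using L unfolding slevel_int_def by blast
    moreover have "a < Suc a \<and> Suc a \<le> b" using ab by simp
    ultimately show ?thesis by blast
  qed
  hence "ennreal (GG (Suc a) / WW (Suc a)) \<le> ennreal (GG b / WW b)"
    using ratio ab by simp
  moreover have "GG (Suc a) / WW (Suc a) = h a" using wpos[of a] by (simp add: GG_def WW_def)
  moreover have nnb: "0 \<le> GG b / WW b" using GGnn[of b] WWpos[OF ab] by simp
  ultimately have ha: "h a \<le> GG b / WW b"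
    using ennreal_le_iff[OF nnb] by metis
  have allc: "\<forall>j. a \<le> j \<and> j < b \<longrightarrow> h j = h a"
  proof (rule ccontr)
    assume "\<not> ?thesis"
    then obtain j where j: "a \<le> j" "j < b" "h j \<noteq> h a" by auto
    have "h j \<le> h a" using dec j by (auto simp: decseq_def)
    with j have hj: "h j < h a" by simp
    have "GG b < (\<Sum>i\<in>{a..<b}. h a * w i)"
      unfolding GG_def
    proof (rule sum_strict_mono_ex1)
      show "\<forall>x\<in>{a..<b}. h x * w x \<le> h a * w x"
      proof
        fix x assume "x \<in> {a..<b}"
        hence "h x \<le> h a" using dec by (simp add: decseq_def)
        thus "h x * w x \<le> h a * w x" using wpos[of x] by (intro mult_right_mono) auto
      qed
      show "\<exists>x\<in>{a..<b}. h x * w x < h a * w x"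
        using j hj wpos[of j] by (intro bexI[of _ j]) auto
    qed simp
    also have "\<dots> = h a * WW b" by (simp add: WW_def sum_distrib_left)
    finally have "GG b / WW b < h a" using WWpos[OF ab] by (simp add: divide_less_eq)
    with ha show False by simp
  qed
  have "GG b = h a * WW b"
    unfolding GG_def WW_def sum_distrib_left
  proof (rule sum.cong)
    fix x assume x: "x \<in> {a..<b}"
    have "h x = h a" using allc x by (meson atLeastLessThan_iff)
    thus "h x * w x = h a * w x" by simp
  qed simp
  hence "GG b / WW b = h a" using WWpos[OF ab] by simp
  hence "Gsum (\<lambda>i. ennreal (h i * w i)) a b / Wsum w a b = ennreal (h a)"
    using ratio[OF ab] by simp
  with allc show ?thesis by (intro conjI)
qed

lemma slevel_fun_eq:
  assumes wpos: "\<And>i. w i > 0" and hnn: "\<And>i. h i \<ge> 0" and dec: "decseq h"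
  shows "slevel_fun w (\<lambda>i. ennreal (h i * w i)) i = ennreal (h i * w i)"
proof (cases "\<exists>a b. smax_level_int w (\<lambda>i. ennreal (h i * w i)) a b \<and> a \<le> i \<and> i < b")
  case True
  let ?P = "\<lambda>p. smax_level_int w (\<lambda>i. ennreal (h i * w i)) (fst p) (snd p) \<and> fst p \<le> i \<and> i < snd p"
  from True obtain a b where "?P (a, b)" by auto
  hence S: "?P (SOME p. ?P p)" by (intro someI[of ?P]) 
  obtain a' b' where ab1: "(SOME p. ?P p) = (a', b')" by (cases "SOME p. ?P p") auto
  have ab: "(SOME p. ?P p) = (a', b')" "?P (a', b')" using ab1 S by simp_all
  have L: "slevel_int w (\<lambda>i. ennreal (h i * w i)) a' b'" using ab(2) by (simp add: smax_level_int_def)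
  note C = slevel_int_const[OF wpos hnn dec L]
  have "a' \<le> i" "i < b'" using ab(2) by simp_all
  hence "h i = h a'" using conjunct1[OF C] by blast
  have "slevel_fun w (\<lambda>i. ennreal (h i * w i)) i
      = Gsum (\<lambda>i. ennreal (h i * w i)) a' b' / Wsum w a' b' * ennreal (w i)"
    unfolding slevel_fun_def using True ab(1) by simp
  also have "\<dots> = ennreal (h a') * ennreal (w i)" using conjunct2[OF C] by simp
  also have "\<dots> = ennreal (h i * w i)" using \<open>h i = h a'\<close> hnn[of i] wpos[of i] by (simp add: ennreal_mult less_imp_le)
  finally show ?thesis .
next
  case False
  show ?thesis unfolding slevel_fun_def by (rule if_not_P[OF False])
qed

lemma qseq_formula:
  assumes phi: "orlicz_fun \<phi>" and wpos: "\<And>i. w i > 0" and hnn: "\<And>i. h i \<ge> 0" and dec: "decseq h"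
    and wdec: "decseq w"
  shows "qseq \<phi> w (\<lambda>i. h i * w i) = (\<Sum>i. ennreal (\<phi> (h i) * w i))"
proof -
  have fdec: "decseq (\<lambda>i. h i * w i)"
    unfolding decseq_def
  proof (intro allI impI)
    fix m n :: nat assume "m \<le> n"
    thus "h n * w n \<le> h m * w m" using dec wdec hnn wpos[of n] wpos[of m]
      by (intro mult_mono) (auto simp: decseq_def)
  qed
  have fnn: "\<And>i. h i * w i \<ge> 0" using hnn wpos by (simp add: less_imp_le)
  have "sdrearr (\<lambda>i. h i * w i) = (\<lambda>i. ennreal (h i * w i))"
    using sdrearr_dec[OF fnn fdec] by auto
  hence "qseq \<phi> w (\<lambda>i. h i * w i) = (\<Sum>i. phi_ext \<phi> (ennreal (h i * w i) / ennreal (w i)) * ennreal (w i))"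
    unfolding qseq_def using slevel_fun_eq[OF wpos hnn dec] by simp
  also have "\<dots> = (\<Sum>i. ennreal (\<phi> (h i) * w i))"
  proof (rule suminf_cong)
    fix i
    have "ennreal (h i * w i) / ennreal (w i) = ennreal (h i)"
      using divide_ennreal[OF fnn[of i] wpos[of i]] wpos[of i] by simp
    show "phi_ext \<phi> (ennreal (h i * w i) / ennreal (w i)) * ennreal (w i) = ennreal (\<phi> (h i) * w i)"
    proof -
      have "phi_ext \<phi> (ennreal (h i)) = ennreal (\<phi> (h i))"
        using hnn[of i] by (simp add: phi_ext_def)
      thus ?thesis using \<open>ennreal (h i * w i) / ennreal (w i) = ennreal (h i)\<close>
          phi_nonneg[OF phi hnn[of i]] wpos[of i] by (metis ennreal_mult less_imp_le)
    qed
  qed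
  finally show ?thesis .
qed

lemma geom_half_sum: "(\<Sum>n<m. (1/2::real) ^ Suc n) = 1 - (1/2) ^ m"
  by (induction m) (auto simp: field_simps)

lemma phi_small:
  assumes phi: "orlicz_fun \<phi>" and B: "B > 0"
  shows "\<exists>\<delta>>0. \<forall>x. 0 \<le> x \<and> x \<le> \<delta> \<longrightarrow> \<phi> x \<le> B"
proof -
  have p1: "\<phi> 1 > 0" using phi_basic(2)[OF phi] by simp
  define \<delta> where "\<delta> = min 1 (B / \<phi> 1)"
  have "\<delta> > 0" using B p1 by (simp add: \<delta>_def)
  moreover have "\<phi> x \<le> B" if "0 \<le> x" "x \<le> \<delta>" for x
  proof -
    have "\<phi> (x * 1) \<le> x * \<phi> 1" using phi_scale[OF phi, of 1 x] that by (simp add: \<delta>_def)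
    also have "\<dots> \<le> (B / \<phi> 1) * \<phi> 1" using that p1 by (intro mult_right_mono) (auto simp: \<delta>_def)
    also have "\<dots> = B" using p1 by simp
    finally show ?thesis by simp
  qed
  ultimately show ?thesis by blast
qed

lemma seq_construction:
  assumes phi: "orlicz_fun \<phi>" and W: "weight_seq w" and nD: "\<not> Delta2_zero \<phi>"
  shows "\<exists>h. (\<forall>i. h i \<ge> 0) \<and> decseq h \<and> (\<Sum>i. ennreal (\<phi> (h i) * w i)) \<le> 1 \<and>
             (\<forall>r>1. (\<Sum>i. ennreal (\<phi> (r * h i) * w i)) = top)"
proof -
  have wpos: "\<And>i. w i > 0" and wdec: "decseq w" and wsum: "(\<Sum>i. ennreal (w i)) = top"
    using W by (auto simp: weight_seq_def)
  define w0 where "w0 = w 0"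
  have w0: "w0 > 0" using wpos by (simp add: w0_def)
  have wle: "\<And>i. w i \<le> w0" using wdec by (simp add: w0_def decseq_def)
  define \<rho> where "\<rho> n = 1 + 1 / (real n + 1)" for n
  have \<rho>1: "\<rho> n > 1" for n by (simp add: \<rho>_def)
  have \<rho>2: "\<rho> n \<le> 2" for n by (simp add: \<rho>_def)
  obtain \<delta> where \<delta>: "\<delta> > 0" "\<And>x. 0 \<le> x \<Longrightarrow> x \<le> \<delta> \<Longrightarrow> \<phi> x \<le> 1 / w0"
    using phi_small[OF phi, of "1/w0"] w0 by auto
  define P where "P n u e \<longleftrightarrow> 0 < u \<and> u \<le> e \<and> \<phi> (\<rho> n * u) > 2 ^ (n+2) * \<phi> u \<and> \<phi> (\<rho> n * u) \<le> 1 / w0"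
    for n u e
  have Pex: "\<exists>u. P n u e" if epos: "e > 0" for n e
  proof -
    obtain u where u: "0 < u" "u \<le> min e (\<delta>/2)" "\<phi> (\<rho> n * u) > 2 ^ (n+2) * \<phi> u"
      using not_Delta2_zero_D[OF phi nD \<rho>1[of n], of "min e (\<delta>/2)" "2^(n+2)"] epos \<delta> by auto
    have "\<rho> n * u \<le> 2 * (\<delta>/2)" using u \<rho>2[of n] \<rho>1[of n] by (intro mult_mono) auto
    hence "\<phi> (\<rho> n * u) \<le> 1 / w0" using \<delta>(2)[of "\<rho> n * u"] u \<rho>1[of n] by auto
    thus ?thesis using u unfolding P_def by auto
  qed
  define v where "v = rec_nat (SOME u. P 0 u 1) (\<lambda>n vn. SOME u. P (Suc n) u vn)"
  have v0: "v 0 = (SOME u. P 0 u 1)" by (simp add: v_def)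
  have vS: "v (Suc n) = (SOME u. P (Suc n) u (v n))" for n by (simp add: v_def)
  have vP: "P n (v n) (if n = 0 then 1 else v (n - 1))" for n
  proof (induction n)
    case 0 thus ?case using someI_ex[OF Pex[of 1 0]] v0 by simp
  next
    case (Suc n)
    have "v n > 0" using Suc by (simp add: P_def)
    thus ?case using someI_ex[OF Pex[of "v n" "Suc n"]] vS[of n] by simp
  qed
  have vpos: "v n > 0" for n using vP[of n] by (simp add: P_def)
  have vdec: "decseq v"
  proof (rule decseq_SucI)
    fix n show "v (Suc n) \<le> v n" using vP[of "Suc n"] by (simp add: P_def)
  qed
  have vjump: "\<phi> (\<rho> n * v n) > 2 ^ (n+2) * \<phi> (v n)" for n using vP[of n] by (simp add: P_def)
  have vtop: "\<phi> (\<rho> n * v n) \<le> 1 / w0" for n using vP[of n] by (simp add: P_def)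
  have phipos: "\<phi> (\<rho> n * v n) > 0" for n using phi_basic(2)[OF phi] vpos[of n] \<rho>1[of n] by simp
  define L where "L n = 1 / \<phi> (\<rho> n * v n)" for n
  have Lpos: "L n > 0" for n using phipos[of n] by (simp add: L_def)
  have Lw0: "w0 \<le> L n" for n
    using vtop[of n] phipos[of n] w0 by (simp add: L_def field_simps)
  have unb: "\<exists>m. (\<Sum>i<m. w i) > B" for B :: real
  proof (rule ccontr)
    assume "\<not> ?thesis"
    hence "\<forall>m. (\<Sum>i<m. w i) \<le> B" by (simp add: not_less)
    hence "\<forall>m. (\<Sum>i<m. ennreal (w i)) \<le> ennreal B"
      using wpos by (auto simp: less_imp_le intro!: ennreal_leI)
    hence "(\<Sum>i. ennreal (w i)) \<le> ennreal B" by (intro suminf_le_const) auto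
    thus False using wsum by (simp add: top_unique)
  qed
  have blk_ex: "\<exists>m. k < m \<and> (\<Sum>i\<in>{k..<m}. w i) \<ge> L n" for k n
  proof -
    obtain m where m: "(\<Sum>i<m. w i) > L n + (\<Sum>i<k. w i)" using unb by blast
    have km: "k < m"
    proof (rule ccontr)
      assume "\<not> k < m"
      hence "(\<Sum>i<m. w i) \<le> (\<Sum>i<k. w i)" using wpos
        by (intro sum_mono2) (auto simp: less_imp_le)
      thus False using m Lpos[of n] by simp
    qed
    have "(\<Sum>i<m. w i) = (\<Sum>i<k. w i) + (\<Sum>i\<in>{k..<m}. w i)"
      using km by (simp add: lessThan_atLeast0 sum.atLeastLessThan_concat)
    thus ?thesis using m km by (intro exI[of _ m]) auto
  qed
  define nxt where "nxt n k = (LEAST m. k < m \<and> (\<Sum>i\<in>{k..<m}. w i) \<ge> L n)" for n k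
  have nxt1: "k < nxt n k" "(\<Sum>i\<in>{k..<nxt n k}. w i) \<ge> L n" for n k
    using LeastI_ex[OF blk_ex[of k n]] by (simp_all add: nxt_def)
  have nxt2: "(\<Sum>i\<in>{k..<nxt n k}. w i) \<le> 2 * L n" for n k
  proof -
    define m where "m = nxt n k"
    have km: "k < m" using nxt1 by (simp add: m_def)
    then obtain m' where m': "m = Suc m'" by (cases m) auto
    have "(\<Sum>i\<in>{k..<m'}. w i) < L n"
    proof (cases "k < m'")
      case True
      have "\<not> (k < m' \<and> (\<Sum>i\<in>{k..<m'}. w i) \<ge> L n)"
        using not_less_Least[of m' "\<lambda>m. k < m \<and> (\<Sum>i\<in>{k..<m}. w i) \<ge> L n"] m'
        unfolding m_def nxt_def by auto
      thus ?thesis using True by auto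
    next
      case False thus ?thesis using Lpos[of n] by simp
    qed
    moreover have "(\<Sum>i\<in>{k..<m}. w i) = (\<Sum>i\<in>{k..<m'}. w i) + w m'"
      using km m' by simp
    ultimately have "(\<Sum>i\<in>{k..<m}. w i) < L n + w0" using wle[of m'] by simp
    thus ?thesis using Lw0[of n] by (simp add: m_def)
  qed
  define c where "c = rec_nat 0 (\<lambda>n cn. nxt n cn)"
  have c0: "c 0 = 0" and cS: "c (Suc n) = nxt n (c n)" for n by (simp_all add: c_def)
  have cmono: "strict_mono c" by (rule strict_monoI_Suc) (simp add: cS nxt1)
  have cge: "n \<le> c n" for n using strict_mono_imp_increasing[OF cmono] by simp
  define S where "S n = (\<Sum>i\<in>{c n..<c (Suc n)}. w i)" for n
  have SL: "L n \<le> S n" "S n \<le> 2 * L n" for n using nxt1 nxt2 by (simp_all add: S_def cS)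
  define blk where "blk i = (LEAST n. i < c (Suc n))" for i
  have blk_ex2: "\<exists>n. i < c (Suc n)" for i using cge[of "Suc i"] by (intro exI[of _ i]) simp
  have blk1: "i < c (Suc (blk i))" for i using LeastI_ex[OF blk_ex2[of i]] by (simp add: blk_def)
  have blk2: "c (blk i) \<le> i" for i
  proof (cases "blk i")
    case 0 thus ?thesis using c0 by simp
  next
    case (Suc n)
    have "\<not> i < c (Suc n)" using not_less_Least[of n "\<lambda>n. i < c (Suc n)"] Suc
      unfolding blk_def by auto
    thus ?thesis using Suc by simp
  qed
  have blk_eq: "blk i = n" if "c n \<le> i" "i < c (Suc n)" for i n
  proof -
    have a: "blk i \<le> n" using that(2) unfolding blk_def by (rule Least_le)
    have "n \<le> blk i"
    proof (rule ccontr)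
      assume "\<not> n \<le> blk i"
      hence "Suc (blk i) \<le> n" by simp
      hence "c (Suc (blk i)) \<le> c n" using cmono by (simp add: strict_mono_less_eq)
      thus False using blk1[of i] that by simp
    qed
    with a show ?thesis by simp
  qed
  define h where "h i = v (blk i)" for i
  have hnn: "h i \<ge> 0" for i using vpos by (simp add: h_def less_imp_le)
  have blkmono: "blk i \<le> blk j" if "i \<le> j" for i j
    using that blk1[of j] unfolding blk_def[of i] by (intro Least_le) simp
  have hdec: "decseq h"
    unfolding decseq_def h_def using vdec blkmono by (auto simp: decseq_def)
  have blocks: "(\<Sum>i<c N. g (h i) * w i) = (\<Sum>n<N. g (v n) * S n)" for g :: "real \<Rightarrow> real" and N
  proof (induction N)
    case 0 thus ?case by (simp add: c0)
  next
    case (Suc N)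
    have "(\<Sum>i<c (Suc N). g (h i) * w i) = (\<Sum>i<c N. g (h i) * w i) + (\<Sum>i\<in>{c N..<c (Suc N)}. g (h i) * w i)"
      using cmono by (simp add: lessThan_atLeast0 sum.atLeastLessThan_concat strict_mono_less_eq)
    also have "(\<Sum>i\<in>{c N..<c (Suc N)}. g (h i) * w i) = (\<Sum>i\<in>{c N..<c (Suc N)}. g (v N) * w i)"
      by (rule sum.cong) (auto simp: h_def blk_eq)
    also have "\<dots> = g (v N) * S N" by (simp add: S_def sum_distrib_left)
    finally show ?case using Suc by simp
  qed
  have termnn: "\<phi> (r * h i) * w i \<ge> 0" if "r \<ge> 0" for r i
    using phi_nonneg[OF phi, of "r * h i"] hnn[of i] wpos[of i] that by simp
  have upper: "(\<Sum>i. ennreal (\<phi> (h i) * w i)) \<le> 1"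
  proof (rule suminf_le_const)
    fix m
    have "(\<Sum>i<m. ennreal (\<phi> (h i) * w i)) \<le> (\<Sum>i<c m. ennreal (\<phi> (h i) * w i))"
      using cge[of m] by (intro sum_mono2) auto
    also have "\<dots> = ennreal (\<Sum>i<c m. \<phi> (h i) * w i)"
      using termnn[of 1] by (subst sum_ennreal) auto
    also have "(\<Sum>i<c m. \<phi> (h i) * w i) = (\<Sum>n<m. \<phi> (v n) * S n)" by (rule blocks)
    also have "\<dots> \<le> (\<Sum>n<m. (1/2) ^ Suc n)"
    proof (rule sum_mono)
      fix n
      have pv: "\<phi> (v n) \<ge> 0" using phi_nonneg[OF phi] vpos[of n] by (simp add: less_imp_le)
      have "\<phi> (v n) * S n \<le> \<phi> (v n) * (2 * L n)" using SL[of n] pv by (intro mult_left_mono) auto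
      also have "\<dots> = 2 * \<phi> (v n) / \<phi> (\<rho> n * v n)" by (simp add: L_def)
      also have "\<dots> \<le> 2 * (\<phi> (\<rho> n * v n) / 2 ^ (n+2)) / \<phi> (\<rho> n * v n)"
        using vjump[of n] phipos[of n] by (intro divide_right_mono mult_left_mono) (auto simp: field_simps)
      also have "\<dots> = (1/2) ^ Suc n" using phipos[of n] by (simp add: field_simps power_add)
      finally show "\<phi> (v n) * S n \<le> (1/2) ^ Suc n" .
    qed
    also have "\<dots> \<le> 1" unfolding geom_half_sum by simp
    finally show "(\<Sum>i<m. ennreal (\<phi> (h i) * w i)) \<le> 1" by (simp add: ennreal_leI)
  qed auto
  have lower: "(\<Sum>i. ennreal (\<phi> (r * h i) * w i)) = top" if r: "r > 1" for r
  proof (rule ccontr)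
    assume ne: "(\<Sum>i. ennreal (\<phi> (r * h i) * w i)) \<noteq> top"
    then obtain R where R: "(\<Sum>i. ennreal (\<phi> (r * h i) * w i)) = ennreal R" and R0: "R \<ge> 0"
      by (cases "(\<Sum>i. ennreal (\<phi> (r * h i) * w i))" rule: ennreal_cases) auto
    obtain N0 :: nat where N0: "1 / (r - 1) < real N0" using reals_Archimedean2 by blast
    have rho_le: "\<rho> n \<le> r" if "N0 \<le> n" for n
    proof -
      have "1 / (real n + 1) \<le> 1 / (real N0 + 1)" using that by (intro divide_left_mono) auto
      also have "\<dots> < r - 1" using N0 r by (simp add: field_simps)
      finally show ?thesis by (simp add: \<rho>_def)
    qed
    have bge: "\<phi> (r * v n) * S n \<ge> 1" if "N0 \<le> n" for n
    proof -
      have "\<phi> (\<rho> n * v n) \<le> \<phi> (r * v n)" using rho_le[OF that] vpos[of n] \<rho>1[of n]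
        by (intro phi_mono[OF phi] mult_right_mono) auto
      moreover have "1 = \<phi> (\<rho> n * v n) * L n" using phipos[of n] by (simp add: L_def)
      ultimately show ?thesis using SL[of n] phipos[of n] Lpos[of n]
        using mult_mono[of "\<phi> (\<rho> n * v n)" "\<phi> (r * v n)" "L n" "S n"] by simp
    qed
    have bnn: "\<phi> (r * v n) * S n \<ge> 0" for n
    proof -
      have "S n \<ge> 0" using SL[of n] Lpos[of n] by simp
      thus ?thesis using phi_nonneg[OF phi, of "r * v n"] vpos[of n] r by simp
    qed
    define N where "N = N0 + nat \<lceil>R\<rceil> + 1"
    have "(\<Sum>n\<in>{N0..<N}. (1::real)) \<le> (\<Sum>n\<in>{N0..<N}. \<phi> (r * v n) * S n)"
      by (rule sum_mono) (use bge in auto)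
    hence "real (N - N0) \<le> (\<Sum>n\<in>{N0..<N}. \<phi> (r * v n) * S n)" by simp
    also have "\<dots> \<le> (\<Sum>n<N. \<phi> (r * v n) * S n)"
      using bnn by (intro sum_mono2) auto
    also have "\<dots> = (\<Sum>i<c N. \<phi> (r * h i) * w i)" using blocks[of "\<lambda>x. \<phi> (r * x)" N] by simp
    finally have A: "real (N - N0) \<le> (\<Sum>i<c N. \<phi> (r * h i) * w i)" .
    have "ennreal (\<Sum>i<c N. \<phi> (r * h i) * w i) = (\<Sum>i<c N. ennreal (\<phi> (r * h i) * w i))"
      using termnn[of r] r by (subst sum_ennreal) auto
    also have "\<dots> \<le> (\<Sum>i. ennreal (\<phi> (r * h i) * w i))" by (intro sum_le_suminf) auto
    finally have "ennreal (\<Sum>i<c N. \<phi> (r * h i) * w i) \<le> ennreal R"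
      using R by simp
    hence "(\<Sum>i<c N. \<phi> (r * h i) * w i) \<le> R" using ennreal_le_iff[OF R0] by simp
    moreover have "real (N - N0) > R"
    proof -
      have "N - N0 = nat \<lceil>R\<rceil> + 1" by (simp add: N_def)
      moreover have "real (nat \<lceil>R\<rceil>) \<ge> R" by linarith
      ultimately show ?thesis by simp
    qed
    ultimately show False using A by simp
  qed
  show ?thesis using hnn hdec upper lower by blast
qed

lemma Iset_cases:
  assumes "0 < \<gamma>"
  obtains (inf) "\<gamma> = \<infinity>" "Iset \<gamma> = {0..}"
        | (fin) g where "\<gamma> = ereal g" "g > 0" "Iset \<gamma> = {0..<g}"
proof (cases \<gamma>)
  case (real g)
  have g: "g > 0" using assms real by simp
  have "Iset \<gamma> = {0..<g}" using real by (auto simp: Iset_def)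
  from fin[OF real g this] show ?thesis .
next
  case PInf
  thus ?thesis using inf by (auto simp: Iset_def)
next
  case MInf
  thus ?thesis using assms by simp
qed

lemma Iset_sets [measurable]: "0 < \<gamma> \<Longrightarrow> Iset \<gamma> \<in> sets borel"
  by (cases rule: Iset_cases) auto

lemma Iset_0: "0 < \<gamma> \<Longrightarrow> 0 \<in> Iset \<gamma>"
  by (simp add: Iset_def zero_ereal_def)

lemma Iset_down: "y \<in> Iset \<gamma> \<Longrightarrow> 0 \<le> x \<Longrightarrow> x \<le> y \<Longrightarrow> x \<in> Iset \<gamma>"
  by (auto simp: Iset_def) (meson ereal_less_eq(3) le_less_trans)

lemma ereal_lt_le: "x < t \<Longrightarrow> ereal t \<le> \<gamma> \<Longrightarrow> ereal x < \<gamma>"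
  using less_le_trans[of "ereal x" "ereal t" \<gamma>] by simp

lemma AE_not_gamma: "AE x in lborel. ereal x \<noteq> \<gamma>"
proof (cases \<gamma>)
  case (real g)
  have "{g} \<in> null_sets lborel" by (rule countable_imp_null_set_lborel) simp
  thus ?thesis using real by (intro AE_I'[of "{g}"]) auto
qed auto

locale wsetting =
  fixes \<gamma> :: ereal and w :: "real \<Rightarrow> real"
  assumes gpos: "0 < \<gamma>" and W: "weight_fun \<gamma> w"
begin

abbreviation "I \<equiv> Iset \<gamma>"

definition wI :: "real \<Rightarrow> real" where "wI x = indicator I x * w x"

lemma wpos: "x \<in> I \<Longrightarrow> w x > 0" using W by (auto simp: weight_fun_def)
lemma wdec: "x \<in> I \<Longrightarrow> y \<in> I \<Longrightarrow> x \<le> y \<Longrightarrow> w y \<le> w x" using W by (auto simp: weight_fun_def)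
lemma wint: "t \<in> I \<Longrightarrow> set_integrable lebesgue {0..t} w" using W by (auto simp: weight_fun_def)

lemma wI_nn: "wI x \<ge> 0" by (auto simp: wI_def indicator_def less_imp_le wpos)

lemma wI_meas [measurable]: "wI \<in> borel_measurable borel"
proof -
  have "mono_on I (\<lambda>x. - w x)" by (auto intro!: mono_onI simp: wdec)
  hence "(\<lambda>x. - w x) \<in> borel_measurable (restrict_space borel I)"
    by (rule borel_measurable_mono_on_fnc)
  hence "(\<lambda>x. - (- w x)) \<in> borel_measurable (restrict_space borel I)" by measurable
  hence "(\<lambda>x. indicator I x *\<^sub>R w x) \<in> borel_measurable borel"
    using gpos by (subst borel_measurable_restrict_space_iff[symmetric]) auto
  thus ?thesis by (simp add: wI_def[abs_def])
qed

lemma wI_eq: "x \<in> I \<Longrightarrow> wI x = w x" by (simp add: wI_def)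

lemma wI_mono: "0 < x \<Longrightarrow> x \<le> y \<Longrightarrow> wI y \<le> wI x"
proof (cases "y \<in> I")
  case True
  assume "0 < x" "x \<le> y"
  hence "x \<in> I" using True Iset_down[OF True] by simp
  thus ?thesis using True wdec \<open>x \<le> y\<close> by (simp add: wI_eq)
next
  case False
  thus ?thesis using wI_nn[of x] by (simp add: wI_def)
qed

lemma W_fin_I: "t \<in> I \<Longrightarrow> (\<integral>\<^sup>+x\<in>{0..t}. ennreal (wI x) \<partial>lborel) < \<infinity>"
proof -
  assume t: "t \<in> I"
  have "integrable lebesgue (\<lambda>x. indicator {0..t} x *\<^sub>R w x)"
    using wint[OF t] by (simp add: set_integrable_def)
  hence "(\<integral>\<^sup>+x. ennreal (norm (indicator {0..t} x *\<^sub>R w x)) \<partial>lebesgue) < \<infinity>"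
    by (simp add: integrable_iff_bounded)
  moreover have "(\<integral>\<^sup>+x\<in>{0..t}. ennreal (wI x) \<partial>lborel) \<le> (\<integral>\<^sup>+x. ennreal (norm (indicator {0..t} x *\<^sub>R w x)) \<partial>lebesgue)"
    unfolding nn_integral_completion
  proof (rule nn_integral_mono)
    fix x
    show "ennreal (wI x) * indicator {0..t} x \<le> ennreal (norm (indicator {0..t} x *\<^sub>R w x))"
    proof (cases "x \<in> {0..t}")
      case True
      hence "x \<in> I" using Iset_down[OF t] by auto
      thus ?thesis using True wpos by (simp add: wI_eq)
    qed simp
  qed
  ultimately show ?thesis by simp
qed

lemma W_fin: assumes "ereal t \<le> \<gamma>" shows "(\<integral>\<^sup>+x\<in>{0<..t}. ennreal (wI x) \<partial>lborel) < \<infinity>"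
proof (cases "t \<in> I")
  case True
  have "(\<integral>\<^sup>+x\<in>{0<..t}. ennreal (wI x) \<partial>lborel) \<le> (\<integral>\<^sup>+x\<in>{0..t}. ennreal (wI x) \<partial>lborel)"
    by (intro nn_integral_mono) (auto split: split_indicator)
  thus ?thesis using W_fin_I[OF True] by simp
next
  case False
  show ?thesis
  proof (cases "t > 0")
    case False
    hence "{0<..t} = {}" by auto
    thus ?thesis by simp
  next
    case True
    define m where "m = t / 2"
    have "ereal m < \<gamma>" using True assms by (intro ereal_lt_le[of m t]) (auto simp: m_def)
    hence m: "m \<in> I" "0 < m" "m < t" using True by (auto simp: m_def Iset_def)
    have "(\<integral>\<^sup>+x\<in>{0<..t}. ennreal (wI x) \<partial>lborel)
          \<le> (\<integral>\<^sup>+x. ennreal (wI x) * indicator {0..m} x + ennreal (w m) * indicator {m<..t} x \<partial>lborel)"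
    proof (rule nn_integral_mono)
      fix x
      show "ennreal (wI x) * indicator {0<..t} x \<le> ennreal (wI x) * indicator {0..m} x + ennreal (w m) * indicator {m<..t} x"
      proof (cases "x \<le> m")
        case True thus ?thesis by (auto split: split_indicator)
      next
        case False
        hence "wI x \<le> wI m" using m by (intro wI_mono) auto
        thus ?thesis using False m by (auto split: split_indicator simp: wI_eq ennreal_leI)
      qed
    qed
    also have "\<dots> = (\<integral>\<^sup>+x\<in>{0..m}. ennreal (wI x) \<partial>lborel) + ennreal (w m) * emeasure lborel {m<..t}"
      by (subst nn_integral_add) (auto simp: nn_integral_cmult_indicator)
    also have "\<dots> < \<infinity>" using W_fin_I[OF m(1)] m by (simp add: ennreal_mult_less_top)
    finally show ?thesis .
  qed
qed

lemma W_pos: assumes "0 \<le> s" "s < t" "ereal t \<le> \<gamma>" shows "(\<integral>\<^sup>+x\<in>{s<..t}. ennreal (wI x) \<partial>lborel) > 0"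
proof -
  define m where "m = (s + t) / 2"
  have "ereal m < \<gamma>" using assms by (intro ereal_lt_le[of m t]) (auto simp: m_def)
  hence m: "m \<in> I" "s < m" "m < t" using assms by (auto simp: m_def Iset_def)
  have "0 < ennreal (w m) * emeasure lborel {s<..m}" using wpos[OF m(1)] m
    by (simp add: ennreal_mult[symmetric] del: ennreal_mult')
  also have "\<dots> = (\<integral>\<^sup>+x. ennreal (w m) * indicator {s<..m} x \<partial>lborel)"
    by (simp add: nn_integral_cmult_indicator)
  also have "\<dots> \<le> (\<integral>\<^sup>+x\<in>{s<..t}. ennreal (wI x) \<partial>lborel)"
  proof (rule nn_integral_mono)
    fix x
    show "ennreal (w m) * indicator {s<..m} x \<le> ennreal (wI x) * indicator {s<..t} x"
    proof (cases "x \<in> {s<..m}")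
      case True
      hence "wI m \<le> wI x" using assms by (intro wI_mono) auto
      thus ?thesis using True m by (auto simp: wI_eq ennreal_leI split: split_indicator)
    qed simp
  qed
  finally show ?thesis .
qed

end

locale hsetting = wsetting +
  fixes h :: "real \<Rightarrow> real"
  assumes hnn: "\<And>x. h x \<ge> 0"
    and hdec: "\<And>x y. 0 < x \<Longrightarrow> x \<le> y \<Longrightarrow> h y \<le> h x"
    and hlc: "\<And>x. 0 < x \<Longrightarrow> \<exists>\<delta>>0. \<forall>y. x - \<delta> < y \<and> y \<le> x \<longrightarrow> h y = h x"
    and hmeas [measurable]: "h \<in> borel_measurable borel"
    and hint: "\<And>t. 0 < t \<Longrightarrow> ereal t \<le> \<gamma> \<Longrightarrow> (\<integral>\<^sup>+x\<in>{0<..t}. ennreal (h x * wI x) \<partial>lborel) < \<infinity>"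
begin

definition f :: "real \<Rightarrow> real" where "f x = h x * w x"

lemma f_nn: "x \<in> I \<Longrightarrow> f x \<ge> 0" using hnn wpos by (simp add: f_def less_imp_le)

lemma f_dec: "0 < x \<Longrightarrow> x \<le> y \<Longrightarrow> y \<in> I \<Longrightarrow> f y \<le> f x"
proof -
  assume a: "0 < x" "x \<le> y" "y \<in> I"
  hence xI: "x \<in> I" using Iset_down by auto
  show ?thesis unfolding f_def using hdec[OF a(1,2)] wdec[OF xI a(3) a(2)] hnn wpos[OF a(3)]
    by (intro mult_mono) auto
qed

lemma fI_meas [measurable]: "(\<lambda>x. h x * wI x) \<in> borel_measurable borel" by measurable

lemma set_meas: "{x \<in> I. s < ennreal \<bar>f x\<bar>} \<in> sets lebesgue"
proof -
  have "{x \<in> I. s < ennreal \<bar>f x\<bar>} = {x \<in> space borel. x \<in> I \<and> s < ennreal \<bar>h x * wI x\<bar>}"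
    by (auto simp: f_def wI_eq)
  also have "\<dots> \<in> sets borel" using gpos by measurable
  finally show ?thesis by simp
qed

lemma leb_Ico: "emeasure lebesgue {a..<b} = ennreal (b - a)" if "a \<le> b" for a b :: real
  using that by simp

lemma leb_Ioc: "emeasure lebesgue {a<..b} = ennreal (b - a)" if "a \<le> b" for a b :: real
  using that by simp

lemma drearr_le: assumes t: "t \<in> I" "0 < t" shows "drearr \<gamma> f t \<le> ennreal (f t)"
  unfolding drearr_def
proof (rule Inf_lower, simp)
  have sub: "{x \<in> I. ennreal (f t) < ennreal \<bar>f x\<bar>} \<subseteq> {0..<t}"
  proof
    fix x assume x: "x \<in> {x \<in> I. ennreal (f t) < ennreal \<bar>f x\<bar>}"
    have "x < t"
    proof (rule ccontr)
      assume "\<not> x < t"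
      hence "f x \<le> f t" using x t by (intro f_dec) auto
      hence A: "ennreal \<bar>f x\<bar> \<le> ennreal (f t)" using f_nn x by (auto intro: ennreal_leI)
      have B: "ennreal (f t) < ennreal \<bar>f x\<bar>" using x by simp
      from A B show False by (meson not_le)
    qed
    thus "x \<in> {0..<t}" using x by (auto simp: Iset_def)
  qed
  have "distr_fun \<gamma> f (ennreal (f t)) \<le> emeasure lebesgue {0..<t}"
    unfolding distr_fun_def using sub by (intro emeasure_mono) auto
  also have "\<dots> = ennreal t" using t by simp
  finally show "distr_fun \<gamma> f (ennreal (f t)) \<le> ennreal t" .
qed

lemma drearr_ge: assumes t: "0 \<le> t" "t < t'" "t' \<in> I" shows "ennreal (f t') \<le> drearr \<gamma> f t"
  unfolding drearr_def
proof (rule Inf_greatest)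
  fix s assume "s \<in> {s. distr_fun \<gamma> f s \<le> ennreal t}"
  hence s: "emeasure lebesgue {x \<in> I. s < ennreal \<bar>f x\<bar>} \<le> ennreal t" by (simp add: distr_fun_def)
  show "ennreal (f t') \<le> s"
  proof (rule ccontr)
    assume "\<not> ennreal (f t') \<le> s"
    hence lt: "s < ennreal (f t')" by simp
    have sub: "{0<..t'} \<subseteq> {x \<in> I. s < ennreal \<bar>f x\<bar>}"
    proof
      fix x assume x: "x \<in> {0<..t'}"
      hence xI: "x \<in> I" using Iset_down[OF t(3)] by auto
      have "f t' \<le> f x" using x t by (intro f_dec) auto
      hence "ennreal (f t') \<le> ennreal \<bar>f x\<bar>" by (auto intro: ennreal_leI)
      thus "x \<in> {x \<in> I. s < ennreal \<bar>f x\<bar>}" using lt xI by (metis (mono_tags) less_le_trans mem_Collect_eq)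
    qed
    have "ennreal t' = emeasure lebesgue {0<..t'}" using t by simp
    also have "\<dots> \<le> emeasure lebesgue {x \<in> I. s < ennreal \<bar>f x\<bar>}"
      using sub set_meas by (intro emeasure_mono) auto
    also have "\<dots> \<le> ennreal t" by (rule s)
    finally show False using t by (simp add: ennreal_le_iff)
  qed
qed

lemma exists_right: assumes "x \<in> I" "\<delta> > 0" shows "\<exists>y. x < y \<and> y < x + \<delta> \<and> y \<in> I"
  using gpos
proof (cases rule: Iset_cases)
  case inf thus ?thesis using assms by (intro exI[of _ "x + \<delta>/2"]) auto
next
  case (fin g)
  thus ?thesis using assms by (intro exI[of _ "x + min \<delta> (g - x) / 2"]) (auto simp: min_def field_simps)
qed

lemma drearr_ae: "AE x in lborel. x \<in> I \<longrightarrow> drearr \<gamma> f x = ennreal (f x)"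
proof -
  define A where "A = {x. 0 < x \<and> x \<in> I}"
  have "mono_on A (\<lambda>x. - f x)"
    by (rule mono_onI) (auto simp: A_def intro: f_dec)
  hence cD: "countable {a\<in>A. \<not> continuous (at a within A) (\<lambda>x. - f x)}" (is "countable ?D")
    by (rule mono_on_ctble_discont)
  have N: "insert 0 ?D \<in> null_sets lborel" using cD by (intro countable_imp_null_set_lborel) auto
  show ?thesis
  proof (rule AE_I'[OF N], rule subsetI)
    fix x assume "x \<in> {x \<in> space lborel. \<not> (x \<in> I \<longrightarrow> drearr \<gamma> f x = ennreal (f x))}"
    hence xI: "x \<in> I" and ne: "drearr \<gamma> f x \<noteq> ennreal (f x)" by auto
    show "x \<in> insert 0 ?D"
    proof (rule ccontr)
      assume nin: "x \<notin> insert 0 ?D"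
      hence x0: "x \<noteq> 0" by auto
      have xA: "x \<in> A" using xI x0 by (auto simp: A_def Iset_def)
      have cont: "continuous (at x within A) (\<lambda>x. - f x)" using nin xA by auto
      have le: "drearr \<gamma> f x \<le> ennreal (f x)" using drearr_le xA by (auto simp: A_def)
      hence lt: "drearr \<gamma> f x < ennreal (f x)" using ne by simp
      then obtain d where d: "drearr \<gamma> f x = ennreal d" "0 \<le> d" "d < f x"
        by (cases "drearr \<gamma> f x" rule: ennreal_cases) (auto simp: ennreal_less_iff)
      have "f x - d > 0" using d by simp
      then obtain \<delta> where \<delta>: "\<delta> > 0" "\<And>y. y \<in> A \<Longrightarrow> dist y x < \<delta> \<Longrightarrow> dist (- f y) (- f x) < f x - d"
        using cont unfolding continuous_within_eps_delta by blast
      obtain y where y: "x < y" "y < x + \<delta>" "y \<in> I" using exists_right[OF xI \<delta>(1)] by blast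
      have yA: "y \<in> A" using y xA by (auto simp: A_def)
      have "dist (- f y) (- f x) < f x - d" using \<delta>(2)[OF yA] y by (simp add: dist_real_def)
      hence fy: "f y > d" by (simp add: dist_real_def)
      have "ennreal (f y) \<le> drearr \<gamma> f x" using drearr_ge[of x y] xA y by (auto simp: A_def)
      hence "f y \<le> d" using d by (simp add: ennreal_le_iff)
      thus False using fy by simp
    qed
  qed
qed

end

context hsetting
begin

definition Gh :: "real \<Rightarrow> real \<Rightarrow> ennreal" where
  "Gh s t = (\<integral>\<^sup>+x\<in>{s<..t}. ennreal (h x * wI x) \<partial>lborel)"
definition Wh :: "real \<Rightarrow> real \<Rightarrow> ennreal" where
  "Wh s t = (\<integral>\<^sup>+x\<in>{s<..t}. ennreal (wI x) \<partial>lborel)"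

lemma in_I: "0 \<le> s \<Longrightarrow> s < x \<Longrightarrow> x \<le> t \<Longrightarrow> ereal t \<le> \<gamma> \<Longrightarrow> ereal x \<noteq> \<gamma> \<Longrightarrow> x \<in> I"
proof -
  assume a: "0 \<le> s" "s < x" "x \<le> t" "ereal t \<le> \<gamma>" "ereal x \<noteq> \<gamma>"
  have "ereal x \<le> \<gamma>" using a(3,4) by (metis ereal_less_eq(3) order_trans)
  thus "x \<in> I" using a by (auto simp: Iset_def)
qed

lemma Gint_eq: assumes "0 \<le> s" "ereal t \<le> \<gamma>" shows "Gint (drearr \<gamma> f) s t = Gh s t"
  unfolding Gint_def Gh_def nn_integral_completion
proof (rule nn_integral_cong_AE)
  show "AE x in lborel. drearr \<gamma> f x * indicator {s<..t} x = ennreal (h x * wI x) * indicator {s<..t} x"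
    using drearr_ae AE_not_gamma[of \<gamma>]
  proof eventually_elim
    case (elim x)
    show ?case
    proof (cases "x \<in> {s<..t}")
      case True
      hence "x \<in> I" using in_I[of s x t] assms elim by auto
      thus ?thesis using elim True by (simp add: f_def wI_eq)
    qed simp
  qed
qed

lemma Wint_eq: assumes "0 \<le> s" "ereal t \<le> \<gamma>" shows "Wint w s t = Wh s t"
  unfolding Wint_def Wh_def nn_integral_completion
proof (rule nn_integral_cong_AE)
  show "AE x in lborel. ennreal (w x) * indicator {s<..t} x = ennreal (wI x) * indicator {s<..t} x"
    using AE_not_gamma[of \<gamma>]
  proof eventually_elim
    case (elim x)
    show ?case
    proof (cases "x \<in> {s<..t}")
      case True
      hence "x \<in> I" using in_I[of s x t] assms elim by auto
      thus ?thesis using elim True by (simp add: wI_eq)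
    qed simp
  qed
qed

lemma Gh_mono_left: "0 \<le> s \<Longrightarrow> Gh s t \<le> Gh 0 t"
  unfolding Gh_def by (intro nn_integral_mono) (auto split: split_indicator)

lemma Wh_mono_left: "0 \<le> s \<Longrightarrow> Wh s t \<le> Wh 0 t"
  unfolding Wh_def by (intro nn_integral_mono) (auto split: split_indicator)

lemma Gh_fin: assumes "0 \<le> s" "s < t" "ereal t \<le> \<gamma>" shows "Gh s t < \<infinity>"
  using Gh_mono_left[of s t] hint[of t] assms by (simp add: Gh_def[of 0])

lemma Wh_fin: assumes "0 \<le> s" "ereal t \<le> \<gamma>" shows "Wh s t < \<infinity>"
  using Wh_mono_left[of s t] W_fin[of t] assms by (simp add: Wh_def[of 0])

lemma Wh_pos: assumes "0 \<le> s" "s < t" "ereal t \<le> \<gamma>" shows "Wh s t > 0"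
  using W_pos[OF assms] by (simp add: Wh_def)

lemma split_Ioc: "s \<le> x \<Longrightarrow> x \<le> t \<Longrightarrow> {s<..t} = {s<..x} \<union> {x<..t}" for s x t :: real
  by auto

lemma Gh_add: "s \<le> x \<Longrightarrow> x \<le> t \<Longrightarrow> Gh s t = Gh s x + Gh x t"
  unfolding Gh_def by (subst split_Ioc, assumption+, rule nn_integral_disjoint_pair) auto

lemma Wh_add: "s \<le> x \<Longrightarrow> x \<le> t \<Longrightarrow> Wh s t = Wh s x + Wh x t"
  unfolding Wh_def by (subst split_Ioc, assumption+, rule nn_integral_disjoint_pair) auto

lemma Gh_lb: assumes "0 \<le> s" "s < x" shows "ennreal (h x) * Wh s x \<le> Gh s x"
proof -
  have "ennreal (h x) * Wh s x = (\<integral>\<^sup>+y. ennreal (h x) * (ennreal (wI y) * indicator {s<..x} y) \<partial>lborel)"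
    unfolding Wh_def by (rule nn_integral_cmult[symmetric]) auto
  also have "\<dots> \<le> Gh s x" unfolding Gh_def
  proof (rule nn_integral_mono)
    fix y
    show "ennreal (h x) * (ennreal (wI y) * indicator {s<..x} y) \<le> ennreal (h y * wI y) * indicator {s<..x} y"
    proof (cases "y \<in> {s<..x}")
      case True
      hence "h x \<le> h y" using assms by (intro hdec) auto
      hence "h x * wI y \<le> h y * wI y" using wI_nn by (intro mult_right_mono) auto
      thus ?thesis using True hnn wI_nn by (simp add: ennreal_mult[symmetric] ennreal_leI)
    qed simp
  qed
  finally show ?thesis .
qed

lemma Gh_ub: assumes "0 < x" shows "Gh x t \<le> ennreal (h x) * Wh x t"
proof -
  have "Gh x t \<le> (\<integral>\<^sup>+y. ennreal (h x) * (ennreal (wI y) * indicator {x<..t} y) \<partial>lborel)"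
    unfolding Gh_def
  proof (rule nn_integral_mono)
    fix y
    show "ennreal (h y * wI y) * indicator {x<..t} y \<le> ennreal (h x) * (ennreal (wI y) * indicator {x<..t} y)"
    proof (cases "y \<in> {x<..t}")
      case True
      hence "h y \<le> h x" using assms by (intro hdec) auto
      hence "h y * wI y \<le> h x * wI y" using wI_nn by (intro mult_right_mono) auto
      thus ?thesis using True hnn wI_nn by (simp add: ennreal_mult[symmetric] ennreal_leI)
    qed simp
  qed
  also have "\<dots> = ennreal (h x) * Wh x t"
    unfolding Wh_def by (rule nn_integral_cmult) auto
  finally show ?thesis .
qed

end

context hsetting
begin

lemma level_const:
  assumes L: "level_int \<gamma> w (drearr \<gamma> f) a b"
  shows "\<exists>c\<ge>0. (\<forall>x. a < x \<and> x \<le> b \<longrightarrow> h x = c) \<and>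
           Gint (drearr \<gamma> f) a b / Wint w a b = ennreal c"
proof -
  have a0: "0 \<le> a" and ab: "a < b" and bg: "ereal b \<le> \<gamma>" using L by (auto simp: level_int_def)
  have lev: "\<And>t. a < t \<Longrightarrow> t \<le> b \<Longrightarrow> Gint (drearr \<gamma> f) a t / Wint w a t \<le> Gint (drearr \<gamma> f) a b / Wint w a b"
    using L by (auto simp: level_int_def)
  have tg: "ereal t \<le> \<gamma>" if "t \<le> b" for t using that bg by (metis ereal_less_eq(3) order_trans)
  define GR where "GR s t = enn2real (Gh s t)" for s t
  define WR where "WR s t = enn2real (Wh s t)" for s t
  have GRe: "Gh s t = ennreal (GR s t)" if "a \<le> s" "s < t" "t \<le> b" for s t
    using Gh_fin[of s t] that a0 tg[of t] by (simp add: GR_def less_top[symmetric] ennreal_enn2real)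
  have WRe: "Wh s t = ennreal (WR s t)" if "a \<le> s" "t \<le> b" for s t
    using Wh_fin[of s t] that a0 tg[of t] by (simp add: WR_def less_top[symmetric] ennreal_enn2real)
  have WRpos: "WR s t > 0" if "a \<le> s" "s < t" "t \<le> b" for s t
    using Wh_pos[of s t] WRe[of s t] that a0 tg[of t] by simp
  have GRnn: "GR s t \<ge> 0" for s t by (simp add: GR_def)
  have WRnn: "WR s t \<ge> 0" for s t by (simp add: WR_def)
  have ratio: "Gint (drearr \<gamma> f) a t / Wint w a t = ennreal (GR a t / WR a t)" if "a < t" "t \<le> b" for t
    using that Gint_eq[OF a0 tg[of t]] Wint_eq[OF a0 tg[of t]] GRe[of a t] WRe[of a t]
      divide_ennreal[OF GRnn WRpos[of a t]] by simp
  define c where "c = GR a b / WR a b"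
  have c0: "c \<ge> 0" using GRnn WRpos[of a b] ab by (simp add: c_def)
  have levR: "GR a t / WR a t \<le> c" if "a < t" "t \<le> b" for t
  proof -
    have "ennreal (GR a t / WR a t) \<le> ennreal c" using lev[OF that] ratio[OF that] ratio[of b] ab
      by (simp add: c_def)
    thus ?thesis using c0 by (simp add: ennreal_le_iff)
  qed
  have inner: "h x = c" if x: "a < x" "x < b" for x
  proof (rule ccontr)
    assume "h x \<noteq> c"
    hence "h x < c \<or> h x > c" by auto
    thus False
    proof
      assume hc: "h x > c"
      have "ennreal (h x) * Wh a x \<le> Gh a x" using Gh_lb[OF a0 x(1)] .
      hence "ennreal (h x * WR a x) \<le> ennreal (GR a x)"
        using GRe[of a x] WRe[of a x] x hnn[of x] WRnn[of a x] by (simp add: ennreal_mult)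
      hence "h x * WR a x \<le> GR a x" using GRnn by (simp add: ennreal_le_iff)
      hence "h x \<le> GR a x / WR a x" using WRpos[of a x] x by (simp add: le_divide_eq)
      with levR[of x] x hc show False by simp
    next
      assume hc: "h x < c"
      have xpos: "0 < x" using a0 x by simp
      have "Gh x b \<le> ennreal (h x) * Wh x b" using Gh_ub[OF xpos] .
      hence "ennreal (GR x b) \<le> ennreal (h x * WR x b)"
        using GRe[of x b] WRe[of x b] x hnn[of x] WRnn[of x b] by (simp add: ennreal_mult)
      hence ub: "GR x b \<le> h x * WR x b" using hnn[of x] WRpos[of x b] x by (simp add: ennreal_le_iff)
      have lt: "h x * WR x b < c * WR x b" using hc WRpos[of x b] x by simp
      have la: "GR a x \<le> c * WR a x" using levR[of x] x WRpos[of a x] by (simp add: divide_le_eq)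
      have "ennreal (GR a b) = ennreal (GR a x) + ennreal (GR x b)"
        using Gh_add[of a x b] GRe[of a b] GRe[of a x] GRe[of x b] x by simp
      hence gadd: "GR a b = GR a x + GR x b" using GRnn by (simp del: ennreal_plus add: ennreal_plus[symmetric])
      have "ennreal (WR a b) = ennreal (WR a x) + ennreal (WR x b)"
        using Wh_add[of a x b] WRe[of a b] WRe[of a x] WRe[of x b] x by simp
      hence wadd: "WR a b = WR a x + WR x b"
        using WRnn by (simp del: ennreal_plus add: ennreal_plus[symmetric])
      have "GR a b < c * WR a b" using gadd wadd ub lt la by (simp add: distrib_left)
      moreover have "c * WR a b = GR a b" using WRpos[of a b] ab by (simp add: c_def)
      ultimately show False by simp
    qed
  qed
  have all: "h x = c" if x: "a < x" "x \<le> b" for x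
  proof (cases "x = b")
    case False thus ?thesis using inner x by simp
  next
    case True
    obtain \<delta> where \<delta>: "\<delta> > 0" "\<And>y. b - \<delta> < y \<Longrightarrow> y \<le> b \<Longrightarrow> h y = h b"
      using hlc[of b] a0 ab by auto
    define y where "y = (max a (b - \<delta>) + b) / 2"
    have y: "a < y" "y < b" "b - \<delta> < y" using ab \<delta>(1) by (auto simp: y_def max_def)
    have "h b = h y" using \<delta>(2)[of y] y by simp
    also have "\<dots> = c" using inner y by simp
    finally show ?thesis using True by simp
  qed
  show ?thesis
    using c0 all ratio[of b] ab by (intro exI[of _ c]) (simp add: c_def)
qed

lemma level_fun_ae: "AE x in lborel. x \<in> I \<longrightarrow> level_fun \<gamma> w (drearr \<gamma> f) x = ennreal (h x * w x)"
  using drearr_ae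
proof eventually_elim
  case (elim x)
  show ?case
  proof
    assume xI: "x \<in> I"
    show "level_fun \<gamma> w (drearr \<gamma> f) x = ennreal (h x * w x)"
    proof (cases "\<exists>a b. max_level_int \<gamma> w (drearr \<gamma> f) a b \<and> a < x \<and> x \<le> b")
      case True
      let ?P = "\<lambda>p. max_level_int \<gamma> w (drearr \<gamma> f) (fst p) (snd p) \<and> fst p < x \<and> x \<le> snd p"
      from True obtain a b where "?P (a, b)" by auto
      hence S: "?P (SOME p. ?P p)" by (intro someI[of ?P])
      obtain a' b' where ab1: "(SOME p. ?P p) = (a', b')" by (cases "SOME p. ?P p") auto
      have ab: "max_level_int \<gamma> w (drearr \<gamma> f) a' b'" "a' < x" "x \<le> b'" using ab1 S by simp_all
      have L: "level_int \<gamma> w (drearr \<gamma> f) a' b'" using ab(1) by (simp add: max_level_int_def)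
      obtain c where c: "c \<ge> 0" "\<forall>x. a' < x \<and> x \<le> b' \<longrightarrow> h x = c"
        "Gint (drearr \<gamma> f) a' b' / Wint w a' b' = ennreal c"
        using level_const[OF L] by blast
      have hx: "h x = c" using c(2) ab(2,3) by blast
      have "level_fun \<gamma> w (drearr \<gamma> f) x = Gint (drearr \<gamma> f) a' b' / Wint w a' b' * ennreal (w x)"
        unfolding level_fun_def using True ab1 by simp
      also have "\<dots> = ennreal c * ennreal (w x)" using c(3) by simp
      also have "\<dots> = ennreal (h x * w x)" using hx c(1) wpos[OF xI] by (simp add: ennreal_mult)
      finally show ?thesis .
    next
      case False
      have "level_fun \<gamma> w (drearr \<gamma> f) x = drearr \<gamma> f x"
        unfolding level_fun_def by (rule if_not_P[OF False])
      thus ?thesis using elim xI by (simp add: f_def)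
    qed
  qed
qed

lemma Qfun_formula:
  assumes phi: "orlicz_fun \<phi>"
  shows "Qfun \<gamma> \<phi> w f = (\<integral>\<^sup>+x\<in>I. ennreal (\<phi> (h x) * w x) \<partial>lborel)"
  unfolding Qfun_def nn_integral_completion
proof (rule nn_integral_cong_AE)
  show "AE x in lborel. phi_ext \<phi> (level_fun \<gamma> w (drearr \<gamma> f) x / ennreal (w x)) * ennreal (w x) * indicator I x
      = ennreal (\<phi> (h x) * w x) * indicator I x"
    using level_fun_ae
  proof eventually_elim
    case (elim x)
    show ?case
    proof (cases "x \<in> I")
      case True
      have wx: "w x > 0" using wpos[OF True] .
      have "ennreal (h x * w x) / ennreal (w x) = ennreal (h x)"
        using divide_ennreal[of "h x * w x" "w x"] wx hnn[of x] by simp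
      moreover have "phi_ext \<phi> (ennreal (h x)) = ennreal (\<phi> (h x))"
        using hnn[of x] by (simp add: phi_ext_def)
      ultimately show ?thesis using elim True phi_nonneg[OF phi hnn[of x]] wx
        by (simp add: ennreal_mult)
    qed simp
  qed
qed

end

context wsetting
begin

lemma split_Ioc': "s \<le> x \<Longrightarrow> x \<le> t \<Longrightarrow> {s<..t} = {s<..x} \<union> {x<..t}" for s x t :: real
  by auto

lemma exists_right_w: assumes "x \<in> I" "\<delta> > 0" shows "\<exists>y. x < y \<and> y < x + \<delta> \<and> y \<in> I"
  using gpos
proof (cases rule: Iset_cases)
  case inf thus ?thesis using assms by (intro exI[of _ "x + \<delta>/2"]) auto
next
  case (fin g)
  thus ?thesis using assms by (intro exI[of _ "x + min \<delta> (g - x) / 2"]) (auto simp: min_def field_simps)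
qed

definition Wf :: "real \<Rightarrow> real \<Rightarrow> ennreal" where
  "Wf s t = (\<integral>\<^sup>+x\<in>{s<..t}. ennreal (wI x) \<partial>lborel)"

definition Wc :: "real \<Rightarrow> real" where "Wc t = enn2real (Wf 0 t)"

lemma Wf_fin: "0 \<le> s \<Longrightarrow> ereal t \<le> \<gamma> \<Longrightarrow> Wf s t < \<infinity>"
proof -
  assume a: "0 \<le> s" "ereal t \<le> \<gamma>"
  have "Wf s t \<le> Wf 0 t" unfolding Wf_def using a by (intro nn_integral_mono) (auto split: split_indicator)
  thus ?thesis using W_fin[OF a(2)] by (simp add: Wf_def)
qed

lemma Wf_add: "s \<le> x \<Longrightarrow> x \<le> t \<Longrightarrow> Wf s t = Wf s x + Wf x t"
  unfolding Wf_def by (subst split_Ioc', assumption+, rule nn_integral_disjoint_pair) auto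

lemma Wf_eq: "0 \<le> s \<Longrightarrow> ereal t \<le> \<gamma> \<Longrightarrow> Wf s t = ennreal (enn2real (Wf s t))"
  using Wf_fin by (simp add: less_top[symmetric] ennreal_enn2real)

lemma Wc_diff: assumes "0 \<le> s" "s \<le> t" "ereal t \<le> \<gamma>" shows "Wf s t = ennreal (Wc t - Wc s)"
proof -
  have "Wf 0 t = Wf 0 s + Wf s t" using assms by (intro Wf_add) auto
  moreover have "ereal s \<le> \<gamma>" using assms by (metis ereal_less_eq(3) order_trans)
  ultimately have "ennreal (Wc t) = ennreal (Wc s) + ennreal (enn2real (Wf s t))"
    using Wf_eq[of 0 t] Wf_eq[of 0 s] Wf_eq[of s t] assms by (simp add: Wc_def)
  hence "Wc t = Wc s + enn2real (Wf s t)" by (simp add: Wc_def del: ennreal_plus add: ennreal_plus[symmetric])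
  thus ?thesis using Wf_eq[of s t] assms by simp
qed

lemma Wc_0: "Wc 0 = 0" by (simp add: Wc_def Wf_def)

lemma Wc_nn: "Wc t \<ge> 0" by (simp add: Wc_def)

lemma Wc_mono: assumes "0 \<le> s" "s \<le> t" "ereal t \<le> \<gamma>" shows "Wc s \<le> Wc t"
  unfolding Wc_def
proof (rule enn2real_mono)
  show "Wf 0 s \<le> Wf 0 t" unfolding Wf_def using assms
    by (intro nn_integral_mono) (auto split: split_indicator)
  show "Wf 0 t < top" using Wf_fin[of 0 t] assms by simp
qed

lemma Wc_lip: assumes "e \<in> I" "0 < e" "e \<le> s" "s \<le> t" "ereal t \<le> \<gamma>"
  shows "Wc t - Wc s \<le> w e * (t - s)"
proof -
  have "ennreal (Wc t - Wc s) = Wf s t" using Wc_diff[of s t] assms by simp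
  also have "\<dots> \<le> (\<integral>\<^sup>+x. ennreal (w e) * indicator {s<..t} x \<partial>lborel)"
    unfolding Wf_def
  proof (rule nn_integral_mono)
    fix x
    show "ennreal (wI x) * indicator {s<..t} x \<le> ennreal (w e) * indicator {s<..t} x"
    proof (cases "x \<in> {s<..t}")
      case True
      hence "wI x \<le> wI e" using assms by (intro wI_mono) auto
      thus ?thesis using True assms by (simp add: wI_eq ennreal_leI)
    qed simp
  qed
  also have "\<dots> = ennreal (w e) * ennreal (t - s)" using assms by (simp add: nn_integral_cmult_indicator)
  also have "\<dots> = ennreal (w e * (t - s))" using wpos[OF assms(1)] assms by (simp add: ennreal_mult)
  finally have "ennreal (Wc t - Wc s) \<le> ennreal (w e * (t - s))" .
  moreover have "w e * (t - s) \<ge> 0" using wpos[OF assms(1)] assms by simp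
  ultimately show ?thesis by (simp add: ennreal_le_iff)
qed

lemma Wc_small: assumes "R > 0" shows "\<exists>\<delta>>0. \<delta> \<in> I \<and> Wc \<delta> < R"
proof -
  obtain t1 where t1: "0 < t1" "t1 < 0 + 1" "t1 \<in> I" using exists_right_w[OF Iset_0[OF gpos], of 1] by auto
  define F where "F k x = ennreal (wI x) * indicator {0<..t1 / (real k + 1)} x" for k x
  have Fdec: "decseq F"
  proof (rule decseq_SucI, rule le_funI)
    fix k x
    have "t1 / (real (Suc k) + 1) \<le> t1 / (real k + 1)" using t1 by (intro divide_left_mono) auto
    thus "F (Suc k) x \<le> F k x" unfolding F_def by (auto split: split_indicator)
  qed
  have tII: "t1 / (real k + 1) \<in> I" for k
  proof -
    have "t1 / (real k + 1) \<le> t1" using t1 by (simp add: divide_le_eq)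
    thus ?thesis using Iset_down[OF t1(3)] t1 by simp
  qed
  have tI: "ereal (t1 / (real k + 1)) \<le> \<gamma>" for k
    using tII[of k] by (simp add: Iset_def less_imp_le)
  have Ffin: "(\<integral>\<^sup>+x. F k x \<partial>lborel) < \<infinity>" for k
    using W_fin[OF tI[of k]] by (simp add: F_def)
  have "(\<integral>\<^sup>+x. (INF k. F k x) \<partial>lborel) = (INF k. (\<integral>\<^sup>+x. F k x \<partial>lborel))"
    by (rule nn_integral_monotone_convergence_INF_decseq[OF Fdec _ Ffin]) (simp add: F_def)
  moreover have "(INF k. F k x) = 0" for x
  proof (cases "x > 0")
    case True
    obtain k :: nat where k: "t1 / x < real k" using reals_Archimedean2 by blast
    have "t1 / (real k + 1) < x" using k True t1 by (simp add: field_simps)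
    hence "F k x = 0" by (simp add: F_def)
    thus ?thesis by (metis INF_lower2 UNIV_I le_zero_eq)
  next
    case False
    hence "F 0 x = 0" by (simp add: F_def)
    thus ?thesis by (metis INF_lower2 UNIV_I le_zero_eq)
  qed
  ultimately have "(INF k. (\<integral>\<^sup>+x. F k x \<partial>lborel)) = 0" by simp
  hence "(INF k. (\<integral>\<^sup>+x. F k x \<partial>lborel)) < ennreal R" using assms by simp
  then obtain k where k: "(\<integral>\<^sup>+x. F k x \<partial>lborel) < ennreal R" by (auto simp: INF_less_iff)
  define \<delta> where "\<delta> = t1 / (real k + 1)"
  have dpos: "\<delta> > 0" using t1 by (simp add: \<delta>_def)
  have dI: "\<delta> \<in> I" using tII[of k] by (simp add: \<delta>_def)
  have "ennreal (Wc \<delta>) = Wf 0 \<delta>" using Wf_eq[of 0 \<delta>] tI[of k] by (simp add: Wc_def \<delta>_def)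
  also have "\<dots> < ennreal R" using k by (simp add: Wf_def F_def \<delta>_def)
  finally have "Wc \<delta> < R" using assms Wc_nn[of \<delta>] by (metis ennreal_less_iff)
  thus ?thesis using dpos dI by blast
qed

lemma Wc_cont: assumes "ereal b \<le> \<gamma>" shows "continuous_on {0..b} Wc"
  unfolding continuous_on_iff
proof (intro ballI allI impI)
  fix x \<epsilon> :: real assume x: "x \<in> {0..b}" and e: "\<epsilon> > 0"
  have bx: "ereal y \<le> \<gamma>" if "y \<le> b" for y using that assms by (metis ereal_less_eq(3) order_trans)
  show "\<exists>\<delta>>0. \<forall>y\<in>{0..b}. dist y x < \<delta> \<longrightarrow> dist (Wc y) (Wc x) < \<epsilon>"
  proof (cases "x = 0")
    case True
    obtain \<delta> where d: "\<delta> > 0" "\<delta> \<in> I" "Wc \<delta> < \<epsilon>" using Wc_small[OF e] by auto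
    have "dist (Wc y) (Wc x) < \<epsilon>" if y: "y \<in> {0..b}" "dist y x < \<delta>" for y
    proof -
      have "y \<le> \<delta>" using y True by (simp add: dist_real_def)
      hence "Wc y \<le> Wc \<delta>" using y d by (intro Wc_mono) (auto simp: Iset_def)
      thus ?thesis using d True Wc_0 Wc_nn[of y] by (simp add: dist_real_def)
    qed
    thus ?thesis using d by blast
  next
    case False
    hence xpos: "x > 0" using x by simp
    define e where "e = x / 2"
    have "ereal e < \<gamma>" using xpos x by (intro ereal_lt_le[of e x] bx) (auto simp: e_def)
    hence eI: "e \<in> I" "0 < e" "e < x" using xpos by (auto simp: e_def Iset_def)
    have we: "w e > 0" using wpos[OF eI(1)] .
    define \<delta> where "\<delta> = min (x / 2) (\<epsilon> / (w e + 1))"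
    have dpos: "\<delta> > 0" using xpos e we by (simp add: \<delta>_def)
    have "dist (Wc y) (Wc x) < \<epsilon>" if y: "y \<in> {0..b}" "dist y x < \<delta>" for y
    proof -
      have yd: "\<bar>y - x\<bar> < \<delta>" using y by (simp add: dist_real_def)
      hence "\<bar>y - x\<bar> < x / 2" by (simp add: \<delta>_def)
      hence ye: "e \<le> y" by (auto simp: e_def abs_if split: if_splits)
      have "w e * \<bar>y - x\<bar> \<le> w e * \<delta>" using yd we by (intro mult_left_mono) auto
      also have "\<dots> \<le> w e * (\<epsilon> / (w e + 1))" using we by (intro mult_left_mono) (auto simp: \<delta>_def)
      also have "\<dots> < \<epsilon>" using we e by (simp add: field_simps)
      finally have lt: "w e * \<bar>y - x\<bar> < \<epsilon>" .
      show ?thesis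
      proof (cases "x \<le> y")
        case True
        have "Wc y - Wc x \<le> w e * (y - x)" using eI True y by (intro Wc_lip bx) auto
        moreover have "Wc x \<le> Wc y" using True x y by (intro Wc_mono bx) auto
        ultimately show ?thesis using lt True by (simp add: dist_real_def)
      next
        case False
        have "Wc x - Wc y \<le> w e * (x - y)" using eI False y ye x by (intro Wc_lip bx) auto
        moreover have "Wc y \<le> Wc x" using False x y by (intro Wc_mono bx) auto
        ultimately show ?thesis using lt False by (simp add: dist_real_def)
      qed
    qed
    thus ?thesis using dpos by blast
  qed
qed

lemma Wc_ivt: assumes "0 \<le> a" "a \<le> b" "ereal b \<le> \<gamma>" "Wc a \<le> y" "y \<le> Wc b"
  shows "\<exists>x. a \<le> x \<and> x \<le> b \<and> Wc x = y"
proof (rule IVT')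
  show "continuous_on {a..b} Wc" by (rule continuous_on_subset[OF Wc_cont[OF assms(3)]]) (use assms in auto)
qed (use assms in auto)

end

lemma anti_meas:
  fixes g :: "real \<Rightarrow> real"
  assumes dec: "\<And>x y. 0 < x \<Longrightarrow> x \<le> y \<Longrightarrow> g y \<le> g x" and c: "\<And>x. x \<le> 0 \<Longrightarrow> g x = g 0"
  shows "g \<in> borel_measurable borel"
proof -
  have "(\<lambda>x. - g x) \<in> borel_measurable borel"
  proof (rule borel_measurable_piecewise_mono[where C="{{..0}, {0<..}}"])
    fix C assume C: "C \<in> {{..0::real}, {0<..}}"
    show "mono_on C (\<lambda>x. - g x)"
    proof (rule mono_onI)
      fix x y assume xy: "x \<in> C" "y \<in> C" "x \<le> y"
      show "- g x \<le> - g y"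
      proof (cases "C = {..0}")
        case True
        hence "x \<le> 0" "y \<le> 0" using xy by auto
        thus ?thesis using c[of x] c[of y] by simp
      next
        case False
        hence "C = {0<..}" using C by blast
        hence "0 < x" using xy by simp
        hence "g y \<le> g x" using dec xy(3) by blast
        thus ?thesis by simp
      qed
    qed
  next
    show "countable {{..0::real}, {0<..}}" by simp
  next
    fix C assume "C \<in> {{..0::real}, {0<..}}"
    thus "C \<in> sets borel" by auto
  next
    show "\<Union> {{..0::real}, {0<..}} = UNIV" by auto
  qed
  hence "(\<lambda>x. - (- g x)) \<in> borel_measurable borel" by measurable
  thus ?thesis by simp
qed

context wsetting
begin

lemma loc_int:
  assumes phi: "orlicz_fun \<phi>" and hnn: "\<And>x. h x \<ge> 0"
    and hdec: "\<And>x y. 0 < x \<Longrightarrow> x \<le> y \<Longrightarrow> h y \<le> h x" and hz: "\<And>x. x \<le> 0 \<Longrightarrow> h x = 0"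
    and fin: "(\<integral>\<^sup>+x\<in>I. ennreal (\<phi> (h x) * w x) \<partial>lborel) < \<infinity>"
    and t: "0 < t" "ereal t \<le> \<gamma>"
  shows "(\<integral>\<^sup>+x\<in>{0<..t}. ennreal (h x * wI x) \<partial>lborel) < \<infinity>"
proof -
  have p1: "\<phi> 1 > 0" using phi_basic(2)[OF phi] by simp
  have hm [measurable]: "h \<in> borel_measurable borel" using hdec hz by (intro anti_meas) auto
  have phm [measurable]: "(\<lambda>x. \<phi> (h x)) \<in> borel_measurable borel"
  proof (rule anti_meas)
    show "\<phi> (h y) \<le> \<phi> (h x)" if "0 < x" "x \<le> y" for x y
      using hdec[OF that] hnn by (intro phi_mono[OF phi]) auto
  qed (simp add: hz)
  have pw: "h x * wI x \<le> wI x + \<phi> (h x) * wI x / \<phi> 1" for x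
  proof (cases "h x \<le> 1")
    case True
    have "h x * wI x \<le> 1 * wI x" using True wI_nn by (intro mult_right_mono) auto
    moreover have "\<phi> (h x) * wI x / \<phi> 1 \<ge> 0" using phi_nonneg[OF phi hnn[of x]] wI_nn p1 by simp
    ultimately show ?thesis by simp
  next
    case False
    have "\<phi> ((1 / h x) * h x) \<le> (1 / h x) * \<phi> (h x)" using False by (intro phi_scale[OF phi]) auto
    hence "\<phi> 1 \<le> \<phi> (h x) / h x" using False by simp
    hence "h x * \<phi> 1 \<le> \<phi> (h x)" using False by (simp add: le_divide_eq mult.commute)
    hence "h x \<le> \<phi> (h x) / \<phi> 1" using p1 by (simp add: le_divide_eq)
    hence "h x * wI x \<le> \<phi> (h x) / \<phi> 1 * wI x" using wI_nn by (intro mult_right_mono) auto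
    thus ?thesis using wI_nn[of x] by simp
  qed
  have "(\<integral>\<^sup>+x\<in>{0<..t}. ennreal (h x * wI x) \<partial>lborel)
      \<le> (\<integral>\<^sup>+x. ennreal (wI x) * indicator {0<..t} x + ennreal (1 / \<phi> 1) * (ennreal (\<phi> (h x) * wI x)) \<partial>lborel)"
  proof (rule nn_integral_mono)
    fix x
    have "ennreal (h x * wI x) \<le> ennreal (wI x + \<phi> (h x) * wI x / \<phi> 1)" using pw by (rule ennreal_leI)
    also have "\<dots> = ennreal (wI x) + ennreal (1 / \<phi> 1) * ennreal (\<phi> (h x) * wI x)"
    proof -
      have n1: "0 \<le> \<phi> (h x) * wI x" using wI_nn[of x] phi_nonneg[OF phi hnn[of x]] by simp
      have n2: "0 \<le> 1 / \<phi> 1" using p1 by simp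
      have "ennreal (wI x + \<phi> (h x) * wI x / \<phi> 1) = ennreal (wI x) + ennreal (\<phi> (h x) * wI x / \<phi> 1)"
        using wI_nn[of x] n1 p1 by (intro ennreal_plus) auto
      moreover have "ennreal (\<phi> (h x) * wI x / \<phi> 1) = ennreal (1 / \<phi> 1) * ennreal (\<phi> (h x) * wI x)"
        using ennreal_mult[OF n2 n1] by simp
      ultimately show ?thesis by simp
    qed
    finally show "ennreal (h x * wI x) * indicator {0<..t} x
      \<le> ennreal (wI x) * indicator {0<..t} x + ennreal (1 / \<phi> 1) * ennreal (\<phi> (h x) * wI x)"
      by (auto split: split_indicator)
  qed
  also have "\<dots> = (\<integral>\<^sup>+x\<in>{0<..t}. ennreal (wI x) \<partial>lborel) + ennreal (1 / \<phi> 1) * (\<integral>\<^sup>+x. ennreal (\<phi> (h x) * wI x) \<partial>lborel)"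
  proof -
    have m1: "(\<lambda>x. ennreal (wI x) * indicator {0<..t} x) \<in> borel_measurable lborel" by measurable
    have m2: "(\<lambda>x. ennreal (1 / \<phi> 1) * ennreal (\<phi> (h x) * wI x)) \<in> borel_measurable lborel" by measurable
    have m3: "(\<lambda>x. ennreal (\<phi> (h x) * wI x)) \<in> borel_measurable lborel" by measurable
    show ?thesis using nn_integral_add[OF m1 m2] nn_integral_cmult[OF m3, of "ennreal (1 / \<phi> 1)"] by simp
  qed
  finally have A: "(\<integral>\<^sup>+x\<in>{0<..t}. ennreal (h x * wI x) \<partial>lborel)
      \<le> (\<integral>\<^sup>+x\<in>{0<..t}. ennreal (wI x) \<partial>lborel) + ennreal (1 / \<phi> 1) * (\<integral>\<^sup>+x. ennreal (\<phi> (h x) * wI x) \<partial>lborel)" .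
  have D: "(\<integral>\<^sup>+x. ennreal (\<phi> (h x) * wI x) \<partial>lborel) \<le> (\<integral>\<^sup>+x\<in>I. ennreal (\<phi> (h x) * w x) \<partial>lborel)"
    by (intro nn_integral_mono) (auto simp: wI_def split: split_indicator)
  have "(\<integral>\<^sup>+x\<in>{0<..t}. ennreal (wI x) \<partial>lborel) + ennreal (1 / \<phi> 1) * (\<integral>\<^sup>+x. ennreal (\<phi> (h x) * wI x) \<partial>lborel)
      \<le> (\<integral>\<^sup>+x\<in>{0<..t}. ennreal (wI x) \<partial>lborel) + ennreal (1 / \<phi> 1) * (\<integral>\<^sup>+x\<in>I. ennreal (\<phi> (h x) * w x) \<partial>lborel)"
    by (intro add_left_mono mult_left_mono D) simp
  with A have "(\<integral>\<^sup>+x\<in>{0<..t}. ennreal (h x * wI x) \<partial>lborel)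
      \<le> (\<integral>\<^sup>+x\<in>{0<..t}. ennreal (wI x) \<partial>lborel) + ennreal (1 / \<phi> 1) * (\<integral>\<^sup>+x\<in>I. ennreal (\<phi> (h x) * w x) \<partial>lborel)"
    by (rule order_trans)
  also have "\<dots> < \<infinity>" using W_fin[OF t(2)] fin by (simp add: ennreal_mult_less_top)
  finally show ?thesis .
qed

lemma fun_main:
  assumes phi: "orlicz_fun \<phi>" and hnn: "\<And>x. h x \<ge> 0"
    and hdec: "\<And>x y. 0 < x \<Longrightarrow> x \<le> y \<Longrightarrow> h y \<le> h x" and hz: "\<And>x. x \<le> 0 \<Longrightarrow> h x = 0"
    and hlc: "\<And>x. 0 < x \<Longrightarrow> \<exists>\<delta>>0. \<forall>y. x - \<delta> < y \<and> y \<le> x \<longrightarrow> h y = h x"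
    and Q1: "(\<integral>\<^sup>+x\<in>I. ennreal (\<phi> (h x) * w x) \<partial>lborel) \<le> 1"
    and Qr: "\<And>r. r > 1 \<Longrightarrow> (\<integral>\<^sup>+x\<in>I. ennreal (\<phi> (r * h x) * w x) \<partial>lborel) = top"
  shows "\<exists>f\<in>Mspace \<gamma> \<phi> w. Qfun \<gamma> \<phi> w f \<le> 1 \<and> (\<forall>r>(1::real). Qfun \<gamma> \<phi> w (\<lambda>x. r * f x) = top)"
proof -
  have hm [measurable]: "h \<in> borel_measurable borel" using hdec hz by (intro anti_meas) auto
  have fin: "(\<integral>\<^sup>+x\<in>I. ennreal (\<phi> (h x) * w x) \<partial>lborel) < \<infinity>" using Q1 by (simp add: le_less_trans)
  have hint: "(\<integral>\<^sup>+x\<in>{0<..t}. ennreal (h x * wI x) \<partial>lborel) < \<infinity>" if "0 < t" "ereal t \<le> \<gamma>" for t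
    using loc_int[OF phi hnn hdec hz fin that] .
  have Qr_formula: "Qfun \<gamma> \<phi> w (\<lambda>x. r * (h x * w x)) = (\<integral>\<^sup>+x\<in>I. ennreal (\<phi> (r * h x) * w x) \<partial>lborel)"
    if r: "r > 0" for r
  proof -
    interpret hs: hsetting \<gamma> w "\<lambda>x. r * h x"
    proof unfold_locales
      show "\<And>x. 0 \<le> r * h x" using hnn r by simp
      show "\<And>x y. 0 < x \<Longrightarrow> x \<le> y \<Longrightarrow> r * h y \<le> r * h x" using hdec r by simp
      show "\<And>x. 0 < x \<Longrightarrow> \<exists>\<delta>>0. \<forall>y. x - \<delta> < y \<and> y \<le> x \<longrightarrow> r * h y = r * h x"
        using hlc by metis
      show "(\<lambda>x. r * h x) \<in> borel_measurable borel" by measurable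
      fix t assume t: "0 < t" "ereal t \<le> \<gamma>"
      have "(\<integral>\<^sup>+x\<in>{0<..t}. ennreal (r * h x * wI x) \<partial>lborel)
          = ennreal r * (\<integral>\<^sup>+x\<in>{0<..t}. ennreal (h x * wI x) \<partial>lborel)"
        using r hnn wI_nn by (subst nn_integral_cmult[symmetric]) (auto simp: ennreal_mult mult.assoc)
      also have "\<dots> < \<infinity>" using hint[OF t] by (simp add: ennreal_mult_less_top)
      finally show "(\<integral>\<^sup>+x\<in>{0<..t}. ennreal (r * h x * wI x) \<partial>lborel) < \<infinity>" .
    qed
    have "(\<lambda>x. r * (h x * w x)) = hs.f" by (auto simp: hs.f_def)
    thus ?thesis using hs.Qfun_formula[OF phi] by simp
  qed
  define f where "f x = h x * w x" for x
  have Qf: "Qfun \<gamma> \<phi> w f \<le> 1" using Qr_formula[of 1] Q1 by (simp add: f_def[abs_def])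
  have meas: "f \<in> borel_measurable (restrict_space lebesgue I)"
  proof -
    have "(\<lambda>x. h x * wI x) \<in> borel_measurable borel" by measurable
    hence "(\<lambda>x. h x * wI x) \<in> borel_measurable lebesgue"
      by (intro measurable_completion) simp
    moreover have "(\<lambda>x. indicator I x *\<^sub>R f x) = (\<lambda>x. h x * wI x)"
      by (auto simp: f_def wI_def)
    ultimately show ?thesis using gpos
      by (subst borel_measurable_restrict_space_iff) auto
  qed
  have "f \<in> Mspace \<gamma> \<phi> w"
  proof -
    have "Qfun \<gamma> \<phi> w f < top" by (rule le_less_trans[OF Qf]) simp
    thus ?thesis unfolding Mspace_def using meas by (auto intro!: exI[of _ 1])
  qed
  moreover have "Qfun \<gamma> \<phi> w (\<lambda>x. r * f x) = top" if "r > 1" for r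
    using Qr_formula[of r] Qr[OF that] that by (simp add: f_def)
  ultimately show ?thesis using Qf by blast
qed

end

lemma ennreal_suminf_top:
  fixes f :: "nat \<Rightarrow> ennreal"
  assumes "\<And>n. N0 \<le> n \<Longrightarrow> 1 \<le> f n"
  shows "suminf f = top"
proof (rule ccontr)
  assume "suminf f \<noteq> top"
  hence "suminf f < top" by (simp add: less_top)
  then obtain k where k: "suminf f < of_nat k" using ennreal_Ex_less_of_nat by blast
  have "of_nat k = (\<Sum>n\<in>{N0..<N0+k}. (1::ennreal))" by simp
  also have "\<dots> \<le> (\<Sum>n\<in>{N0..<N0+k}. f n)" using assms by (intro sum_mono) auto
  also have "\<dots> \<le> suminf f" by (intro sum_le_suminf) auto
  finally show False using k by simp
qed

lemma ennreal_suminf_le_1: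
  fixes f :: "nat \<Rightarrow> ennreal"
  assumes "\<And>n. f n \<le> ennreal ((1/2) ^ Suc n)"
  shows "suminf f \<le> 1"
proof (rule suminf_le_const)
  fix m
  have "(\<Sum>n<m. f n) \<le> (\<Sum>n<m. ennreal ((1/2) ^ Suc n))" using assms by (intro sum_mono) auto
  also have "\<dots> = ennreal (\<Sum>n<m. (1/2) ^ Suc n)" by (subst sum_ennreal) auto
  also have "\<dots> \<le> 1" unfolding geom_half_sum by simp
  finally show "(\<Sum>n<m. f n) \<le> 1" .
qed auto

lemma phi_big:
  assumes phi: "orlicz_fun \<phi>"
  shows "\<exists>u1\<ge>1. \<forall>u\<ge>u1. \<phi> u \<ge> B"
proof -
  have p1: "\<phi> 1 > 0" using phi_basic(2)[OF phi] by simp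
  define u1 where "u1 = max 1 (B / \<phi> 1)"
  have "\<phi> u \<ge> B" if u: "u \<ge> u1" for u
  proof -
    have u1': "u \<ge> 1" using u by (simp add: u1_def)
    have "\<phi> ((1 / u) * u) \<le> (1 / u) * \<phi> u" using u1' by (intro phi_scale[OF phi]) auto
    hence "\<phi> 1 \<le> \<phi> u / u" using u1' by simp
    hence "u * \<phi> 1 \<le> \<phi> u" using u1' by (simp add: le_divide_eq mult.commute)
    moreover have "B \<le> u * \<phi> 1" using u p1 by (simp add: u1_def divide_le_eq)
    ultimately show ?thesis by simp
  qed
  thus ?thesis by (intro exI[of _ u1]) (auto simp: u1_def)
qed

context wsetting
begin

lemma step_integral:
  fixes p q :: "nat \<Rightarrow> real" and v :: "nat \<Rightarrow> real" and G :: "real \<Rightarrow> real"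
  assumes disj: "\<And>m n. m \<noteq> n \<Longrightarrow> {p m<..q m} \<inter> {p n<..q n} = {}"
    and p0: "\<And>n. 0 \<le> p n" and qI: "\<And>n. q n \<in> I"
    and hv: "\<And>n x. x \<in> {p n<..q n} \<Longrightarrow> h x = v n"
    and G0: "\<And>x. x \<in> I \<Longrightarrow> (\<forall>n. x \<notin> {p n<..q n}) \<Longrightarrow> G (h x) = 0"
    and Gnn: "\<And>n. G (v n) \<ge> 0"
  shows "(\<integral>\<^sup>+x\<in>I. ennreal (G (h x) * w x) \<partial>lborel) = (\<Sum>n. ennreal (G (v n)) * Wf (p n) (q n))"
proof -
  have pw: "ennreal (G (h x) * w x) * indicator I x
      = (\<Sum>n. ennreal (G (v n)) * (ennreal (wI x) * indicator {p n<..q n} x))" for x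
  proof (cases "\<exists>n. x \<in> {p n<..q n}")
    case True
    then obtain n where n: "x \<in> {p n<..q n}" by blast
    have xI: "x \<in> I" using n p0[of n] Iset_down[OF qI[of n]] by auto
    have "(\<Sum>m. ennreal (G (v m)) * (ennreal (wI x) * indicator {p m<..q m} x))
        = (\<Sum>m\<in>{n}. ennreal (G (v m)) * (ennreal (wI x) * indicator {p m<..q m} x))"
    proof (rule suminf_finite)
      fix m assume "m \<notin> {n}"
      hence "x \<notin> {p m<..q m}" using disj[of m n] n by auto
      thus "ennreal (G (v m)) * (ennreal (wI x) * indicator {p m<..q m} x) = 0" by simp
    qed simp
    also have "\<dots> = ennreal (G (v n)) * ennreal (w x)" using n xI by (simp add: wI_eq)
    also have "\<dots> = ennreal (G (h x) * w x) * indicator I x"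
      using hv[OF n] xI Gnn[of n] wpos[OF xI] by (simp add: ennreal_mult)
    finally show ?thesis by simp
  next
    case False
    hence "(\<Sum>m. ennreal (G (v m)) * (ennreal (wI x) * indicator {p m<..q m} x)) = 0" by simp
    moreover have "ennreal (G (h x) * w x) * indicator I x = 0"
    proof (cases "x \<in> I")
      case True thus ?thesis using G0[OF True] False by simp
    qed simp
    ultimately show ?thesis by simp
  qed
  have "(\<integral>\<^sup>+x\<in>I. ennreal (G (h x) * w x) \<partial>lborel)
      = (\<integral>\<^sup>+x. (\<Sum>n. ennreal (G (v n)) * (ennreal (wI x) * indicator {p n<..q n} x)) \<partial>lborel)"
    using pw by simp
  also have "\<dots> = (\<Sum>n. (\<integral>\<^sup>+x. ennreal (G (v n)) * (ennreal (wI x) * indicator {p n<..q n} x) \<partial>lborel))"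
    by (rule nn_integral_suminf) measurable
  also have "\<dots> = (\<Sum>n. ennreal (G (v n)) * Wf (p n) (q n))"
    unfolding Wf_def by (subst nn_integral_cmult) auto
  finally show ?thesis .
qed

end

context wsetting
begin

lemma Wc_unbounded:
  assumes ginf: "\<gamma> = \<infinity>"
  shows "\<exists>S\<ge>0. Wc S \<ge> B"
proof (rule ccontr)
  assume nt: "\<not> ?thesis"
  have lt: "Wc S < B" if "S \<ge> 0" for S using nt that by (meson not_le)
  have Ieq: "I = {0..}" using ginf by (auto simp: Iset_def)
  define F where "F k x = ennreal (wI x) * indicator {0<..real k} x" for k x
  have Finc: "incseq F"
    by (rule incseq_SucI, rule le_funI) (auto simp: F_def split: split_indicator)
  have Fm: "F k \<in> borel_measurable lborel" for k unfolding F_def by measurable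
  have sup: "(SUP k. F k x) = ennreal (wI x) * indicator {0<..} x" for x
  proof (cases "x > 0")
    case True
    obtain k :: nat where k: "x \<le> real k" using real_arch_simple by blast
    have "F k x = ennreal (wI x) * indicator {0<..} x" using k True by (simp add: F_def)
    moreover have "F j x \<le> ennreal (wI x) * indicator {0<..} x" for j
      by (auto simp: F_def split: split_indicator)
    ultimately show ?thesis by (metis (no_types, lifting) SUP_upper UNIV_I SUP_least antisym)
  next
    case False
    thus ?thesis by (simp add: F_def)
  qed
  have "(\<integral>\<^sup>+x. ennreal (wI x) * indicator {0<..} x \<partial>lborel) = (SUP k. integral\<^sup>N lborel (F k))"
    using nn_integral_monotone_convergence_SUP[OF Finc Fm] sup by simp
  also have "\<dots> \<le> ennreal B"
  proof (rule SUP_least)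
    fix k
    have "integral\<^sup>N lborel (F k) = Wf 0 (real k)" by (simp add: F_def[abs_def] Wf_def)
    also have "\<dots> = ennreal (Wc (real k))"
    proof -
      have "ereal (real k) \<le> \<gamma>" using ginf by simp
      thus ?thesis using Wf_eq[of 0 "real k"] by (simp add: Wc_def)
    qed
    also have "\<dots> \<le> ennreal B" using lt[of "real k"] by (simp add: ennreal_leI less_imp_le)
    finally show "integral\<^sup>N lborel (F k) \<le> ennreal B" .
  qed
  finally have A: "(\<integral>\<^sup>+x. ennreal (wI x) * indicator {0<..} x \<partial>lborel) \<le> ennreal B" .
  have "(\<integral>\<^sup>+x\<in>{0..}. ennreal (w x) \<partial>lebesgue) = (\<integral>\<^sup>+x. ennreal (wI x) * indicator {0<..} x \<partial>lborel)"
    unfolding nn_integral_completion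
  proof (rule nn_integral_cong_AE)
    have "{0::real} \<in> null_sets lborel" by (rule countable_imp_null_set_lborel) simp
    hence "AE x in lborel. x \<noteq> 0" by (intro AE_I'[of "{0}"]) auto
    thus "AE x in lborel. ennreal (w x) * indicator {0..} x = ennreal (wI x) * indicator {0<..} x"
      by eventually_elim (auto simp: wI_def Ieq split: split_indicator)
  qed
  also have "\<dots> < top" using A by (simp add: le_less_trans)
  finally show False using W ginf by (simp add: weight_fun_def)
qed

lemma constr_zero:
  assumes phi: "orlicz_fun \<phi>" and nD: "\<not> Delta2_zero \<phi>" and ginf: "\<gamma> = \<infinity>"
  shows "\<exists>h. (\<forall>x. h x \<ge> 0) \<and> (\<forall>x y. 0 < x \<longrightarrow> x \<le> y \<longrightarrow> h y \<le> h x) \<and> (\<forall>x. x \<le> 0 \<longrightarrow> h x = 0)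
    \<and> (\<forall>x. 0 < x \<longrightarrow> (\<exists>\<delta>>0. \<forall>y. x - \<delta> < y \<and> y \<le> x \<longrightarrow> h y = h x))
    \<and> (\<integral>\<^sup>+x\<in>I. ennreal (\<phi> (h x) * w x) \<partial>lborel) \<le> 1
    \<and> (\<forall>r>1. (\<integral>\<^sup>+x\<in>I. ennreal (\<phi> (r * h x) * w x) \<partial>lborel) = top)"
proof -
  have Ieq: "I = {0..}" using ginf by (auto simp: Iset_def)
  define \<rho> where "\<rho> n = 1 + 1 / (real n + 1)" for n
  have \<rho>1: "\<rho> n > 1" for n by (simp add: \<rho>_def)
  have \<rho>2: "\<rho> n \<le> 2" for n by (simp add: \<rho>_def)
  obtain \<delta> where \<delta>: "\<delta> > 0" "\<And>x. 0 \<le> x \<Longrightarrow> x \<le> \<delta> \<Longrightarrow> \<phi> x \<le> 1"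
    using phi_small[OF phi, of 1] by auto
  define P where "P n u e \<longleftrightarrow> 0 < u \<and> u \<le> e \<and> \<phi> (\<rho> n * u) > 2 ^ (n+2) * \<phi> u \<and> \<phi> (\<rho> n * u) \<le> 1"
    for n u e
  have Pex: "\<exists>u. P n u e" if epos: "e > 0" for n e
  proof -
    obtain u where u: "0 < u" "u \<le> min e (\<delta>/2)" "\<phi> (\<rho> n * u) > 2 ^ (n+2) * \<phi> u"
      using not_Delta2_zero_D[OF phi nD \<rho>1[of n], of "min e (\<delta>/2)" "2^(n+2)"] epos \<delta> by auto
    have "\<rho> n * u \<le> 2 * (\<delta>/2)" using u \<rho>2[of n] \<rho>1[of n] by (intro mult_mono) auto
    hence "\<phi> (\<rho> n * u) \<le> 1" using \<delta>(2)[of "\<rho> n * u"] u \<rho>1[of n] by auto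
    thus ?thesis using u unfolding P_def by auto
  qed
  define v where "v = rec_nat (SOME u. P 0 u 1) (\<lambda>n vn. SOME u. P (Suc n) u vn)"
  have v0: "v 0 = (SOME u. P 0 u 1)" by (simp add: v_def)
  have vS: "v (Suc n) = (SOME u. P (Suc n) u (v n))" for n by (simp add: v_def)
  have vP: "P n (v n) (if n = 0 then 1 else v (n - 1))" for n
  proof (induction n)
    case 0 thus ?case using someI_ex[OF Pex[of 1 0]] v0 by simp
  next
    case (Suc n)
    have "v n > 0" using Suc by (simp add: P_def)
    thus ?case using someI_ex[OF Pex[of "v n" "Suc n"]] vS[of n] by simp
  qed
  have vpos: "v n > 0" for n using vP[of n] by (simp add: P_def)
  have vdec: "decseq v"
  proof (rule decseq_SucI)
    fix n show "v (Suc n) \<le> v n" using vP[of "Suc n"] by (simp add: P_def)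
  qed
  have vjump: "\<phi> (\<rho> n * v n) > 2 ^ (n+2) * \<phi> (v n)" for n using vP[of n] by (simp add: P_def)
  have vtop: "\<phi> (\<rho> n * v n) \<le> 1" for n using vP[of n] by (simp add: P_def)
  have phv: "\<phi> (v n) > 0" for n using phi_basic(2)[OF phi] vpos[of n] by simp
  define a where "a n = (1/2) ^ (n+2) / \<phi> (v n)" for n
  have apos: "a n > 0" for n using phv[of n] by (simp add: a_def)
  have a1: "a n \<ge> 1" for n
  proof -
    have "2 ^ (n+2) * \<phi> (v n) < 1" using vjump[of n] vtop[of n] by simp
    hence "\<phi> (v n) < (1/2) ^ (n+2)" by (simp add: field_simps power_divide)
    thus ?thesis using phv[of n] by (simp add: a_def)
  qed
  have sex: "\<exists>s. sn \<le> s \<and> Wc s = Wc sn + a n" if sn: "0 \<le> sn" for sn n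
  proof -
    obtain S where S: "S \<ge> 0" "Wc S \<ge> Wc sn + a n" using Wc_unbounded[OF ginf] by blast
    have snS: "sn \<le> S"
    proof (rule ccontr)
      assume "\<not> sn \<le> S"
      hence "Wc S \<le> Wc sn" using S sn ginf by (intro Wc_mono) auto
      thus False using S apos[of n] by simp
    qed
    obtain s where "sn \<le> s" "s \<le> S" "Wc s = Wc sn + a n"
      using Wc_ivt[of sn S "Wc sn + a n"] snS sn S apos[of n] ginf by auto
    thus ?thesis by blast
  qed
  define s where "s = rec_nat 0 (\<lambda>n sn. SOME s. sn \<le> s \<and> Wc s = Wc sn + a n)"
  have s0: "s 0 = 0" by (simp add: s_def)
  have sS: "s (Suc n) = (SOME t. s n \<le> t \<and> Wc t = Wc (s n) + a n)" for n by (simp add: s_def)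
  have sP: "0 \<le> s n \<and> s n \<le> s (Suc n) \<and> Wc (s (Suc n)) = Wc (s n) + a n" for n
  proof (induction n)
    case 0 thus ?case using someI_ex[OF sex[of 0 0]] sS[of 0] s0 by simp
  next
    case (Suc n)
    have "0 \<le> s (Suc n)" using Suc by simp
    thus ?case using someI_ex[OF sex[of "s (Suc n)" "Suc n"]] sS[of "Suc n"] by simp
  qed
  have snn: "0 \<le> s n" for n using sP by simp
  have smono: "incseq s" using sP by (intro incseq_SucI) simp
  have sstrict: "s n < s (Suc n)" for n
  proof (rule ccontr)
    assume "\<not> s n < s (Suc n)"
    hence "s (Suc n) = s n" using sP[of n] by simp
    thus False using sP[of n] apos[of n] by simp
  qed
  have Wcs: "Wc (s n) \<ge> real n" for n
  proof (induction n)
    case 0 thus ?case using Wc_0 s0 by simp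
  next
    case (Suc n) thus ?case using sP[of n] a1[of n] by simp
  qed
  have reach: "\<exists>n. x \<le> s (Suc n)" if x: "x > 0" for x
  proof -
    obtain n :: nat where n: "Wc x < real n" using reals_Archimedean2 by blast
    show ?thesis
    proof (rule ccontr)
      assume "\<not> ?thesis"
      hence "s (Suc n) < x" by (simp add: not_le)
      hence "Wc (s (Suc n)) \<le> Wc x" using snn ginf by (intro Wc_mono) auto
      thus False using Wcs[of "Suc n"] n by simp
    qed
  qed
  define idx where "idx x = (LEAST n. x \<le> s (Suc n))" for x
  define h where "h x = (if x \<le> 0 then 0 else v (idx x))" for x
  have idx1: "x \<le> s (Suc (idx x))" if "x > 0" for x
    using LeastI_ex[OF reach[OF that]] by (simp add: idx_def)
  have idx2: "s (idx x) < x" if x: "x > 0" for x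
  proof (cases "idx x")
    case 0 thus ?thesis using s0 x by simp
  next
    case (Suc m)
    have "\<not> x \<le> s (Suc m)" using not_less_Least[of m "\<lambda>n. x \<le> s (Suc n)"] Suc
      unfolding idx_def by auto
    thus ?thesis using Suc by simp
  qed
  have idx_eq: "idx x = n" if "s n < x" "x \<le> s (Suc n)" for x n
  proof -
    have a: "idx x \<le> n" unfolding idx_def using that(2) by (rule Least_le)
    have "n \<le> idx x"
    proof (rule ccontr)
      assume "\<not> n \<le> idx x"
      hence "Suc (idx x) \<le> n" by simp
      hence "s (Suc (idx x)) \<le> s n" using smono by (simp add: incseq_def)
      moreover have "x > 0" using that snn[of n] by simp
      ultimately show False using idx1[of x] that by simp
    qed
    with a show ?thesis by simp
  qed
  have hpiece: "h x = v n" if "x \<in> {s n<..s (Suc n)}" for x n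
  proof -
    have "x > 0" using that snn[of n] by simp
    thus ?thesis using idx_eq[of n x] that by (simp add: h_def)
  qed
  have hnn: "\<forall>x. h x \<ge> 0" using vpos by (simp add: h_def less_imp_le)
  have hdec: "\<forall>x y. 0 < x \<longrightarrow> x \<le> y \<longrightarrow> h y \<le> h x"
  proof (intro allI impI)
    fix x y :: real assume xy: "0 < x" "x \<le> y"
    have "idx x \<le> idx y" unfolding idx_def[of x] using idx1[of y] xy by (intro Least_le) simp
    hence "v (idx y) \<le> v (idx x)" using vdec by (simp add: decseq_def)
    thus "h y \<le> h x" using xy by (simp add: h_def)
  qed
  have hz: "\<forall>x. x \<le> 0 \<longrightarrow> h x = 0" by (simp add: h_def)
  have hlc: "\<forall>x. 0 < x \<longrightarrow> (\<exists>\<delta>>0. \<forall>y. x - \<delta> < y \<and> y \<le> x \<longrightarrow> h y = h x)"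
  proof (intro allI impI)
    fix x :: real assume x: "0 < x"
    define n where "n = idx x"
    have xn: "x \<in> {s n<..s (Suc n)}" using idx1[OF x] idx2[OF x] by (simp add: n_def)
    show "\<exists>\<delta>>0. \<forall>y. x - \<delta> < y \<and> y \<le> x \<longrightarrow> h y = h x"
    proof (intro exI[of _ "x - s n"] conjI allI impI)
      show "x - s n > 0" using xn by simp
      fix y assume "x - (x - s n) < y \<and> y \<le> x"
      hence "y \<in> {s n<..s (Suc n)}" using xn by auto
      thus "h y = h x" using hpiece[of y n] hpiece[of x n] xn by simp
    qed
  qed
  have disj: "{s m<..s (Suc m)} \<inter> {s n<..s (Suc n)} = {}" if "m \<noteq> n" for m n
  proof -
    have "s (Suc m) \<le> s n" if "m < n" for m n using smono that by (simp add: incseq_def)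
    thus ?thesis using \<open>m \<noteq> n\<close> by (cases "m < n") (auto simp: not_less dest: less_imp_le)
  qed
  have Wfa: "Wf (s n) (s (Suc n)) = ennreal (a n)" for n
    using Wc_diff[of "s n" "s (Suc n)"] sP[of n] ginf by simp
  have integ: "(\<integral>\<^sup>+x\<in>I. ennreal (\<phi> (r * h x) * w x) \<partial>lborel) = (\<Sum>n. ennreal (\<phi> (r * v n)) * ennreal (a n))"
    if r: "r \<ge> 0" for r
  proof -
    have "(\<integral>\<^sup>+x\<in>I. ennreal (\<phi> (r * h x) * w x) \<partial>lborel) = (\<Sum>n. ennreal (\<phi> (r * v n)) * Wf (s n) (s (Suc n)))"
    proof (rule step_integral[where G="\<lambda>u. \<phi> (r * u)"])
      show "\<And>m n. m \<noteq> n \<Longrightarrow> {s m<..s (Suc m)} \<inter> {s n<..s (Suc n)} = {}" using disj by blast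
      show "\<And>n. 0 \<le> s n" using snn by blast
      show "\<And>n. s (Suc n) \<in> I" using snn Ieq by auto
      show "\<And>n x. x \<in> {s n<..s (Suc n)} \<Longrightarrow> h x = v n" using hpiece by blast
      show "\<And>n. 0 \<le> \<phi> (r * v n)" using phi_nonneg[OF phi] vpos r by (simp add: less_imp_le)
      fix x assume x: "x \<in> I" "\<forall>n. x \<notin> {s n<..s (Suc n)}"
      have "x = 0"
      proof (rule ccontr)
        assume "x \<noteq> 0"
        hence "x > 0" using x Ieq by auto
        hence "x \<in> {s (idx x)<..s (Suc (idx x))}" using idx1 idx2 by auto
        thus False using x by blast
      qed
      thus "\<phi> (r * h x) = 0" using phi_basic(1)[OF phi] by (simp add: h_def)
    qed
    thus ?thesis using Wfa by simp
  qed
  have Q1: "(\<integral>\<^sup>+x\<in>I. ennreal (\<phi> (h x) * w x) \<partial>lborel) \<le> 1"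
  proof -
    have "(\<Sum>n. ennreal (\<phi> (1 * v n)) * ennreal (a n)) \<le> 1"
    proof (rule ennreal_suminf_le_1)
      fix n
      have "\<phi> (v n) * a n = (1/2) ^ Suc (Suc n)" using phv[of n] by (simp add: a_def)
      also have "\<dots> \<le> (1/2) ^ Suc n" by (simp add: power_decreasing)
      finally show "ennreal (\<phi> (1 * v n)) * ennreal (a n) \<le> ennreal ((1/2) ^ Suc n)"
        using phv[of n] apos[of n] by (simp add: ennreal_mult[symmetric] ennreal_leI del: ennreal_mult')
    qed
    thus ?thesis using integ[of 1] by simp
  qed
  have Qr: "(\<integral>\<^sup>+x\<in>I. ennreal (\<phi> (r * h x) * w x) \<partial>lborel) = top" if r: "r > 1" for r
  proof -
    obtain N0 :: nat where N0: "1 / (r - 1) < real N0" using reals_Archimedean2 by blast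
    have "(\<Sum>n. ennreal (\<phi> (r * v n)) * ennreal (a n)) = top"
    proof (rule ennreal_suminf_top[of N0])
      fix n assume n: "N0 \<le> n"
      have "1 / (real n + 1) \<le> 1 / (real N0 + 1)" using n by (intro divide_left_mono) auto
      also have "\<dots> < r - 1" using N0 r by (simp add: field_simps)
      finally have rn: "\<rho> n \<le> r" by (simp add: \<rho>_def)
      have "\<phi> (\<rho> n * v n) \<le> \<phi> (r * v n)" using rn vpos[of n] \<rho>1[of n]
        by (intro phi_mono[OF phi] mult_right_mono) auto
      moreover have "1 \<le> \<phi> (\<rho> n * v n) * a n"
      proof -
        have "2 ^ (n+2) * \<phi> (v n) * a n = 1" using phv[of n] by (simp add: a_def power_divide)
        moreover have "2 ^ (n+2) * \<phi> (v n) * a n \<le> \<phi> (\<rho> n * v n) * a n"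
          using vjump[of n] apos[of n] by (intro mult_right_mono) auto
        ultimately show ?thesis by simp
      qed
      ultimately have one: "1 \<le> \<phi> (r * v n) * a n" using apos[of n]
        by (meson mult_right_mono less_imp_le order_trans)
      have pn: "0 \<le> \<phi> (r * v n)" using phi_nonneg[OF phi] vpos[of n] r by simp
      have "ennreal 1 \<le> ennreal (\<phi> (r * v n) * a n)" using one by (rule ennreal_leI)
      also have "\<dots> = ennreal (\<phi> (r * v n)) * ennreal (a n)" using pn apos[of n] by (simp add: ennreal_mult)
      finally show "1 \<le> ennreal (\<phi> (r * v n)) * ennreal (a n)" by simp
    qed
    thus ?thesis using integ[of r] r by simp
  qed
  show ?thesis using hnn hdec hz hlc Q1 Qr by blast
qed

end

context wsetting
begin

lemma Wc_lower: assumes "t0 \<in> I" "0 \<le> s" "s \<le> t0" shows "w t0 * s \<le> Wc s"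
proof -
  have sI: "ereal s \<le> \<gamma>" using assms Iset_down[OF assms(1)] by (auto simp: Iset_def less_imp_le)
  have "ennreal (w t0 * s) = ennreal (w t0) * emeasure lborel {0<..s}"
    using assms wpos[OF assms(1)] by (simp add: ennreal_mult)
  also have "\<dots> = (\<integral>\<^sup>+x. ennreal (w t0) * indicator {0<..s} x \<partial>lborel)"
    by (simp add: nn_integral_cmult_indicator)
  also have "\<dots> \<le> Wf 0 s" unfolding Wf_def
  proof (rule nn_integral_mono)
    fix x
    show "ennreal (w t0) * indicator {0<..s} x \<le> ennreal (wI x) * indicator {0<..s} x"
    proof (cases "x \<in> {0<..s}")
      case True
      hence "wI t0 \<le> wI x" using assms by (intro wI_mono) auto
      thus ?thesis using True assms by (simp add: wI_eq ennreal_leI)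
    qed simp
  qed
  also have "\<dots> = ennreal (Wc s)" using Wf_eq[of 0 s] sI by (simp add: Wc_def)
  finally show ?thesis using Wc_nn[of s] by (simp add: ennreal_le_iff)
qed

lemma constr_infty:
  assumes phi: "orlicz_fun \<phi>" and nD: "\<not> Delta2_infty \<phi>"
  shows "\<exists>h. (\<forall>x. h x \<ge> 0) \<and> (\<forall>x y. 0 < x \<longrightarrow> x \<le> y \<longrightarrow> h y \<le> h x) \<and> (\<forall>x. x \<le> 0 \<longrightarrow> h x = 0)
    \<and> (\<forall>x. 0 < x \<longrightarrow> (\<exists>\<delta>>0. \<forall>y. x - \<delta> < y \<and> y \<le> x \<longrightarrow> h y = h x))
    \<and> (\<integral>\<^sup>+x\<in>I. ennreal (\<phi> (h x) * w x) \<partial>lborel) \<le> 1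
    \<and> (\<forall>r>1. (\<integral>\<^sup>+x\<in>I. ennreal (\<phi> (r * h x) * w x) \<partial>lborel) = top)"
proof -
  obtain t0 where t0: "0 < t0" "t0 \<in> I" using exists_right_w[OF Iset_0[OF gpos], of 1] by auto
  have t0g: "ereal t0 \<le> \<gamma>" using t0 by (simp add: Iset_def less_imp_le)
  define T where "T = Wc t0"
  have Tpos: "T > 0"
  proof -
    have "0 < Wf 0 t0" using W_pos[of 0 t0] t0 t0g by (simp add: Wf_def)
    moreover have "Wf 0 t0 = ennreal T" using Wf_eq[of 0 t0] t0g by (simp add: T_def Wc_def)
    ultimately show ?thesis by simp
  qed
  define \<rho> where "\<rho> n = 1 + 1 / (real n + 1)" for n
  have \<rho>1: "\<rho> n > 1" for n by (simp add: \<rho>_def)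
  obtain \<delta> where \<delta>: "\<delta> > 0" "\<And>x. 0 \<le> x \<Longrightarrow> x \<le> \<delta> \<Longrightarrow> \<phi> x \<le> 1 / (4 * T)"
    using phi_small[OF phi, of "1 / (4 * T)"] Tpos by auto
  obtain u1 where u1: "u1 \<ge> 1" "\<And>u. u \<ge> u1 \<Longrightarrow> \<phi> u \<ge> 1 / T"
    using phi_big[OF phi, of "1 / T"] by auto
  define Q where "Q n u M \<longleftrightarrow> M \<le> u \<and> 0 < u \<and> \<phi> (\<rho> n * u) > 2 ^ (n+2) * \<phi> u \<and> \<phi> u \<ge> 1 / T"
    for n u M
  have Qex: "\<exists>u. Q n u M" for n M
  proof -
    obtain u where u: "max M u1 \<le> u" "0 < u" "\<phi> (\<rho> n * u) > 2 ^ (n+2) * \<phi> u"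
      using not_Delta2_infty_D[OF phi nD \<rho>1[of n], of "max M u1" "2^(n+2)"] by auto
    thus ?thesis using u1(2)[of u] unfolding Q_def by (intro exI[of _ u]) auto
  qed
  define v where "v = rec_nat \<delta> (\<lambda>n vn. SOME u. Q (Suc n) u vn)"
  have v0: "v 0 = \<delta>" by (simp add: v_def)
  have vS: "v (Suc n) = (SOME u. Q (Suc n) u (v n))" for n by (simp add: v_def)
  have vQ: "Q (Suc n) (v (Suc n)) (v n)" for n using someI_ex[OF Qex] vS[of n] by simp
  have vpos: "v n > 0" for n by (cases n) (use vQ \<delta> v0 in \<open>auto simp: Q_def\<close>)
  have vinc: "incseq v" by (rule incseq_SucI) (use vQ in \<open>simp add: Q_def\<close>)
  have vjump: "\<phi> (\<rho> n * v n) > 2 ^ (n+2) * \<phi> (v n)" if "n \<ge> 1" for n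
    using vQ[of "n - 1"] that by (simp add: Q_def)
  have vbig: "\<phi> (v n) \<ge> 1 / T" if "n \<ge> 1" for n
    using vQ[of "n - 1"] that by (simp add: Q_def)
  have phv: "\<phi> (v n) > 0" for n using phi_basic(2)[OF phi] vpos[of n] by simp
  have v0small: "\<phi> (v 0) * T \<le> 1/4"
  proof -
    have "\<phi> (v 0) \<le> 1 / (4 * T)" using \<delta> v0 by simp
    hence "\<phi> (v 0) * T \<le> 1 / (4 * T) * T" using Tpos by (intro mult_right_mono) auto
    thus ?thesis using Tpos by simp
  qed
  define a where "a n = (1/2) ^ (n+2) / \<phi> (v n)" for n
  have apos: "a n > 0" for n using phv[of n] by (simp add: a_def)
  have abound: "a (Suc k) \<le> T / 8 * (1/2) ^ k" for k
  proof -
    have "1 / T \<le> \<phi> (v (Suc k))" using vbig[of "Suc k"] by simp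
    hence "1 / \<phi> (v (Suc k)) \<le> T" using Tpos phv[of "Suc k"] by (simp add: divide_le_eq mult.commute)
    hence "(1/2) ^ (k+3) * (1 / \<phi> (v (Suc k))) \<le> (1/2) ^ (k+3) * T" by (intro mult_left_mono) auto
    thus ?thesis by (simp add: a_def power_add field_simps)
  qed
  have sumS: "summable (\<lambda>k. a (Suc k))"
  proof (rule summable_comparison_test)
    show "\<exists>N. \<forall>n\<ge>N. norm (a (Suc n)) \<le> T / 8 * (1/2) ^ n"
      using abound apos by (intro exI[of _ 0]) (auto simp: less_imp_le)
    show "summable (\<lambda>n. T / 8 * (1/2::real) ^ n)" by (intro summable_mult summable_geometric) simp
  qed
  define S1 where "S1 = (\<Sum>k. a (Suc k))"
  have S1le: "S1 \<le> T / 4"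
    unfolding S1_def
  proof (rule suminf_le_const[OF sumS])
    fix m
    have "(\<Sum>k<m. a (Suc k)) \<le> (\<Sum>k<m. T / 4 * (1/2) ^ Suc k)"
      using abound by (intro sum_mono) (simp add: field_simps)
    also have "\<dots> = T / 4 * (\<Sum>k<m. (1/2::real) ^ Suc k)" by (rule sum_distrib_left[symmetric])
    also have "\<dots> = T / 4 * (1 - (1/2) ^ m)" by (simp only: geom_half_sum)
    also have "\<dots> \<le> T / 4" using Tpos by (simp add: mult_le_cancel_left1)
    finally show "(\<Sum>k<m. a (Suc k)) \<le> T / 4" .
  qed
  define A where "A n = (if n = 0 then T - S1 else a n)" for n
  have Apos: "A n > 0" for n using apos[of n] S1le Tpos by (simp add: A_def)
  have sumA: "summable A"
  proof -
    have "summable (\<lambda>k. A (Suc k))" using sumS by (simp add: A_def)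
    thus ?thesis by (simp add: summable_Suc_iff)
  qed
  have sA: "suminf A = T"
  proof -
    have "(\<Sum>k. A (Suc k)) = suminf A - A 0" using suminf_split_head[OF sumA] .
    moreover have "(\<Sum>k. A (Suc k)) = S1" by (simp add: A_def S1_def)
    ultimately show ?thesis by (simp add: A_def)
  qed
  define R where "R n = T - (\<Sum>k<n. A k)" for n
  have R0: "R 0 = T" by (simp add: R_def)
  have RS: "R n - R (Suc n) = A n" for n by (simp add: R_def)
  have Rnn: "0 \<le> R n" for n
  proof -
    have "(\<Sum>k<n. A k) \<le> suminf A" using sumA Apos by (intro sum_le_suminf) (auto simp: less_imp_le)
    thus ?thesis using sA by (simp add: R_def)
  qed
  have RT: "R n \<le> T" for n using Apos by (simp add: R_def sum_nonneg less_imp_le)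
  have Rlim: "R \<longlonglongrightarrow> 0"
  proof -
    have "(\<lambda>n. T - (\<Sum>k<n. A k)) \<longlonglongrightarrow> T - T"
      using summable_LIMSEQ[OF sumA] sA by (intro tendsto_diff) auto
    thus ?thesis by (simp add: R_def[abs_def])
  qed
  have sex: "\<exists>s. 0 \<le> s \<and> s \<le> t0 \<and> Wc s = R n" for n
    using Wc_ivt[of 0 t0 "R n"] Wc_0 Rnn[of n] RT[of n] t0 t0g by (auto simp: T_def)
  define s where "s n = (SOME s. 0 \<le> s \<and> s \<le> t0 \<and> Wc s = R n)" for n
  have sP: "0 \<le> s n" "s n \<le> t0" "Wc (s n) = R n" for n
    using someI_ex[OF sex[of n]] by (simp_all add: s_def)
  have sg: "ereal (s n) \<le> \<gamma>" for n using sP(2)[of n] t0g by (metis ereal_less_eq(3) order_trans)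
  have sstrict: "s (Suc n) < s n" for n
  proof (rule ccontr)
    assume "\<not> s (Suc n) < s n"
    hence "Wc (s n) \<le> Wc (s (Suc n))" using sP sg by (intro Wc_mono) auto
    thus False using sP(3)[of n] sP(3)[of "Suc n"] RS[of n] Apos[of n] by simp
  qed
  have sdec: "decseq s" using sstrict by (intro decseq_SucI less_imp_le)
  have wt0: "w t0 > 0" using wpos[OF t0(2)] .
  have reach: "\<exists>n. s (Suc n) < x" if x: "x > 0" for x
  proof -
    have "eventually (\<lambda>n. R n < w t0 * x) sequentially"
      using Rlim wt0 x by (intro order_tendstoD) auto
    then obtain N where N: "\<And>n. N \<le> n \<Longrightarrow> R n < w t0 * x" by (auto simp: eventually_sequentially)
    define n where "n = N"
    have n: "R (Suc n) < w t0 * x" using N[of "Suc N"] by (simp add: n_def)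
    have "w t0 * s (Suc n) \<le> R (Suc n)" using Wc_lower[OF t0(2) sP(1) sP(2)] sP(3) by simp
    hence "w t0 * s (Suc n) < w t0 * x" using n by simp
    hence "s (Suc n) < x" using wt0 by simp
    thus ?thesis by blast
  qed
  define idx where "idx x = (LEAST n. s (Suc n) < x)" for x
  define h where "h x = (if 0 < x \<and> x \<le> s 0 then v (idx x) else 0)" for x
  have idx1: "s (Suc (idx x)) < x" if "x > 0" for x
    using LeastI_ex[OF reach[OF that]] by (simp add: idx_def)
  have idx2: "x \<le> s (idx x)" if x: "x \<le> s 0" for x
  proof (cases "idx x")
    case 0 thus ?thesis using x by simp
  next
    case (Suc m)
    have "\<not> s (Suc m) < x" using not_less_Least[of m "\<lambda>n. s (Suc n) < x"] Suc
      unfolding idx_def by auto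
    thus ?thesis using Suc by simp
  qed
  have idx_eq: "idx x = n" if "s (Suc n) < x" "x \<le> s n" for x n
  proof -
    have a: "idx x \<le> n" unfolding idx_def using that(1) by (rule Least_le)
    have "n \<le> idx x"
    proof (rule ccontr)
      assume "\<not> n \<le> idx x"
      hence "Suc (idx x) \<le> n" by simp
      hence "s n \<le> s (Suc (idx x))" using sdec by (simp add: decseq_def)
      moreover have "x > 0" using that sP(1)[of "Suc n"] by simp
      ultimately show False using idx1[of x] that by simp
    qed
    with a show ?thesis by simp
  qed
  have hpiece: "h x = v n" if "x \<in> {s (Suc n)<..s n}" for x n
  proof -
    have "x > 0" using that sP(1)[of "Suc n"] by simp
    moreover have "x \<le> s 0" using that sdec by (auto simp: decseq_def intro: order_trans)
    ultimately show ?thesis using idx_eq[of n x] that by (simp add: h_def)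
  qed
  have hnn: "\<forall>x. h x \<ge> 0" using vpos by (simp add: h_def less_imp_le)
  have hdec: "\<forall>x y. 0 < x \<longrightarrow> x \<le> y \<longrightarrow> h y \<le> h x"
  proof (intro allI impI)
    fix x y :: real assume xy: "0 < x" "x \<le> y"
    show "h y \<le> h x"
    proof (cases "y \<le> s 0")
      case False thus ?thesis using hnn by (simp add: h_def)
    next
      case True
      have "idx y \<le> idx x" unfolding idx_def[of y] using idx1[of x] xy by (intro Least_le) simp
      hence "v (idx y) \<le> v (idx x)" using vinc by (simp add: incseq_def)
      thus ?thesis using xy True by (simp add: h_def)
    qed
  qed
  have hz: "\<forall>x. x \<le> 0 \<longrightarrow> h x = 0" by (simp add: h_def)
  have hlc: "\<forall>x. 0 < x \<longrightarrow> (\<exists>\<delta>>0. \<forall>y. x - \<delta> < y \<and> y \<le> x \<longrightarrow> h y = h x)"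
  proof (intro allI impI)
    fix x :: real assume x: "0 < x"
    show "\<exists>\<delta>>0. \<forall>y. x - \<delta> < y \<and> y \<le> x \<longrightarrow> h y = h x"
    proof (cases "x \<le> s 0")
      case False
      show ?thesis
      proof (intro exI[of _ "x - s 0"] conjI allI impI)
        show "x - s 0 > 0" using False by simp
        fix y assume "x - (x - s 0) < y \<and> y \<le> x"
        thus "h y = h x" using False by (simp add: h_def)
      qed
    next
      case True
      define n where "n = idx x"
      have xn: "x \<in> {s (Suc n)<..s n}" using idx1[OF x] idx2[OF True] by (simp add: n_def)
      show ?thesis
      proof (intro exI[of _ "x - s (Suc n)"] conjI allI impI)
        show "x - s (Suc n) > 0" using xn by simp
        fix y assume "x - (x - s (Suc n)) < y \<and> y \<le> x"
        hence "y \<in> {s (Suc n)<..s n}" using xn by auto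
        thus "h y = h x" using hpiece[of y n] hpiece[of x n] xn by simp
      qed
    qed
  qed
  have disj: "{s (Suc m)<..s m} \<inter> {s (Suc n)<..s n} = {}" if "m \<noteq> n" for m n
  proof -
    have "s n \<le> s (Suc m)" if "m < n" for m n using sdec that by (simp add: decseq_def)
    thus ?thesis using \<open>m \<noteq> n\<close> by (cases "m < n") (auto simp: not_less dest: less_imp_le)
  qed
  have Wfa: "Wf (s (Suc n)) (s n) = ennreal (A n)" for n
    using Wc_diff[of "s (Suc n)" "s n"] sP(1)[of "Suc n"] sstrict[of n] sg[of n] sP(3) RS[of n]
    by (simp add: less_imp_le)
  have integ: "(\<integral>\<^sup>+x\<in>I. ennreal (\<phi> (r * h x) * w x) \<partial>lborel) = (\<Sum>n. ennreal (\<phi> (r * v n)) * ennreal (A n))"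
    if r: "r \<ge> 0" for r
  proof -
    have "(\<integral>\<^sup>+x\<in>I. ennreal (\<phi> (r * h x) * w x) \<partial>lborel) = (\<Sum>n. ennreal (\<phi> (r * v n)) * Wf (s (Suc n)) (s n))"
    proof (rule step_integral[where G="\<lambda>u. \<phi> (r * u)"])
      show "\<And>m n. m \<noteq> n \<Longrightarrow> {s (Suc m)<..s m} \<inter> {s (Suc n)<..s n} = {}" using disj by blast
      show "\<And>n. 0 \<le> s (Suc n)" using sP(1) by blast
      show "\<And>n. s n \<in> I" using sP(1,2) Iset_down[OF t0(2)] by blast
      show "\<And>n x. x \<in> {s (Suc n)<..s n} \<Longrightarrow> h x = v n" using hpiece by blast
      show "\<And>n. 0 \<le> \<phi> (r * v n)" using phi_nonneg[OF phi] vpos r by (simp add: less_imp_le)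
      fix x assume x: "x \<in> I" "\<forall>n. x \<notin> {s (Suc n)<..s n}"
      have "\<not> (0 < x \<and> x \<le> s 0)"
      proof
        assume xx: "0 < x \<and> x \<le> s 0"
        hence "x \<in> {s (Suc (idx x))<..s (idx x)}" using idx1 idx2 by auto
        thus False using x by blast
      qed
      hence "h x = 0" unfolding h_def by (rule if_not_P)
      thus "\<phi> (r * h x) = 0" using phi_basic(1)[OF phi] by simp
    qed
    thus ?thesis using Wfa by simp
  qed
  have Q1: "(\<integral>\<^sup>+x\<in>I. ennreal (\<phi> (h x) * w x) \<partial>lborel) \<le> 1"
  proof -
    have "(\<Sum>n. ennreal (\<phi> (1 * v n)) * ennreal (A n)) \<le> 1"
    proof (rule ennreal_suminf_le_1)
      fix n
      have "\<phi> (v n) * A n \<le> (1/2) ^ Suc n"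
      proof (cases n)
        case 0
        have S1nn: "0 \<le> S1" unfolding S1_def using apos by (intro suminf_nonneg[OF sumS] less_imp_le)
        have "\<phi> (v 0) * (T - S1) \<le> \<phi> (v 0) * T" using phv[of 0] S1nn
          by (intro mult_left_mono) auto
        thus ?thesis using 0 v0small by (simp add: A_def)
      next
        case (Suc m)
        have "\<phi> (v n) * A n = (1/2) ^ Suc (Suc n)" using phv[of n] Suc by (simp add: A_def a_def)
        also have "\<dots> \<le> (1/2) ^ Suc n" by (simp add: power_decreasing)
        finally show ?thesis .
      qed
      moreover have "0 \<le> \<phi> (v n)" using phv[of n] by simp
      ultimately show "ennreal (\<phi> (1 * v n)) * ennreal (A n) \<le> ennreal ((1/2) ^ Suc n)"
        using Apos[of n] by (simp add: ennreal_mult[symmetric] ennreal_leI del: ennreal_mult')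
    qed
    thus ?thesis using integ[of 1] by simp
  qed
  have Qr: "(\<integral>\<^sup>+x\<in>I. ennreal (\<phi> (r * h x) * w x) \<partial>lborel) = top" if r: "r > 1" for r
  proof -
    obtain N0 :: nat where N0: "1 / (r - 1) < real N0" using reals_Archimedean2 by blast
    have "(\<Sum>n. ennreal (\<phi> (r * v n)) * ennreal (A n)) = top"
    proof (rule ennreal_suminf_top[of "Suc N0"])
      fix n assume n: "Suc N0 \<le> n"
      hence n1: "n \<ge> 1" by simp
      have "1 / (real n + 1) \<le> 1 / (real N0 + 1)" using n by (intro divide_left_mono) auto
      also have "\<dots> < r - 1" using N0 r by (simp add: field_simps)
      finally have rn: "\<rho> n \<le> r" by (simp add: \<rho>_def)
      have An: "A n = a n" using n1 by (simp add: A_def)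
      have "\<phi> (\<rho> n * v n) \<le> \<phi> (r * v n)" using rn vpos[of n] \<rho>1[of n]
        by (intro phi_mono[OF phi] mult_right_mono) auto
      moreover have "1 \<le> \<phi> (\<rho> n * v n) * a n"
      proof -
        have "2 ^ (n+2) * \<phi> (v n) * a n = 1" using phv[of n] by (simp add: a_def power_divide)
        moreover have "2 ^ (n+2) * \<phi> (v n) * a n \<le> \<phi> (\<rho> n * v n) * a n"
          using vjump[OF n1] apos[of n] by (intro mult_right_mono) auto
        ultimately show ?thesis by simp
      qed
      ultimately have one: "1 \<le> \<phi> (r * v n) * A n" using apos[of n] An
        by (metis mult_right_mono less_imp_le order_trans)
      have pn: "0 \<le> \<phi> (r * v n)" using phi_nonneg[OF phi] vpos[of n] r by simp
      have "ennreal 1 \<le> ennreal (\<phi> (r * v n) * A n)" using one by (rule ennreal_leI)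
      also have "\<dots> = ennreal (\<phi> (r * v n)) * ennreal (A n)" using pn Apos[of n] by (simp add: ennreal_mult)
      finally show "1 \<le> ennreal (\<phi> (r * v n)) * ennreal (A n)" by simp
    qed
    thus ?thesis using integ[of r] r by simp
  qed
  show ?thesis using hnn hdec hz hlc Q1 Qr by blast
qed

end

lemma part_fun:
  assumes phi: "orlicz_fun \<phi>" and g: "0 < \<gamma>" and W: "weight_fun \<gamma> w" and nD: "\<not> appr_Delta2 \<gamma> \<phi>"
  shows "\<exists>f\<in>Mspace \<gamma> \<phi> w. Qfun \<gamma> \<phi> w f \<le> 1 \<and> (\<forall>r>(1::real). Qfun \<gamma> \<phi> w (\<lambda>x. r * f x) = top)"
proof -
  interpret wsetting \<gamma> w using g W by unfold_locales
  have ex: "\<exists>h. (\<forall>x. h x \<ge> 0) \<and> (\<forall>x y. 0 < x \<longrightarrow> x \<le> y \<longrightarrow> h y \<le> h x) \<and> (\<forall>x. x \<le> 0 \<longrightarrow> h x = 0)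
    \<and> (\<forall>x. 0 < x \<longrightarrow> (\<exists>\<delta>>0. \<forall>y. x - \<delta> < y \<and> y \<le> x \<longrightarrow> h y = h x))
    \<and> (\<integral>\<^sup>+x\<in>I. ennreal (\<phi> (h x) * w x) \<partial>lborel) \<le> 1
    \<and> (\<forall>r>1. (\<integral>\<^sup>+x\<in>I. ennreal (\<phi> (r * h x) * w x) \<partial>lborel) = top)"
  proof (cases "Delta2_infty \<phi>")
    case False
    thus ?thesis using constr_infty[OF phi] by blast
  next
    case True
    have ginf: "\<gamma> = \<infinity>" using nD True by (auto simp: appr_Delta2_def split: if_splits)
    have "\<not> Delta2_zero \<phi>" using nD True ginf by (simp add: appr_Delta2_def Delta2_def)
    thus ?thesis using constr_zero[OF phi _ ginf] by blast
  qed
  then obtain h where h: "\<forall>x. h x \<ge> 0" "\<forall>x y. 0 < x \<longrightarrow> x \<le> y \<longrightarrow> h y \<le> h x" "\<forall>x. x \<le> 0 \<longrightarrow> h x = 0"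
    "\<forall>x. 0 < x \<longrightarrow> (\<exists>\<delta>>0. \<forall>y. x - \<delta> < y \<and> y \<le> x \<longrightarrow> h y = h x)"
    "(\<integral>\<^sup>+x\<in>I. ennreal (\<phi> (h x) * w x) \<partial>lborel) \<le> 1"
    "\<forall>r>1. (\<integral>\<^sup>+x\<in>I. ennreal (\<phi> (r * h x) * w x) \<partial>lborel) = top"
    by blast
  show ?thesis
    by (rule fun_main[OF phi]) (use h in auto)
qed

lemma part_seq:
  assumes phi: "orlicz_fun \<phi>" and W: "weight_seq w" and nD: "\<not> Delta2_zero \<phi>"
  shows "\<exists>f\<in>mseq \<phi> w. qseq \<phi> w f \<le> 1 \<and> (\<forall>r>(1::real). qseq \<phi> w (\<lambda>i. r * f i) = top)"
proof -
  have wpos: "\<And>i. w i > 0" and wdec: "decseq w" using W by (auto simp: weight_seq_def)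
  obtain h where h: "\<forall>i. h i \<ge> 0" "decseq h" "(\<Sum>i. ennreal (\<phi> (h i) * w i)) \<le> 1"
    "\<forall>r>1. (\<Sum>i. ennreal (\<phi> (r * h i) * w i)) = top"
    using seq_construction[OF phi W nD] by blast
  have form: "qseq \<phi> w (\<lambda>i. r * (h i * w i)) = (\<Sum>i. ennreal (\<phi> (r * h i) * w i))" if r: "r > 0" for r
  proof -
    have "qseq \<phi> w (\<lambda>i. (r * h i) * w i) = (\<Sum>i. ennreal (\<phi> (r * h i) * w i))"
    proof (rule qseq_formula[OF phi wpos _ _ wdec])
      show "\<And>i. 0 \<le> r * h i" using h(1) r by simp
      show "decseq (\<lambda>i. r * h i)" using h(2) r by (auto simp: decseq_def intro: mult_left_mono)
    qed
    thus ?thesis by (simp add: mult.assoc)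
  qed
  define f where "f i = h i * w i" for i
  have q1: "qseq \<phi> w f \<le> 1" using form[of 1] h(3) by (simp add: f_def[abs_def])
  have "f \<in> mseq \<phi> w"
  proof -
    have "qseq \<phi> w (\<lambda>i. 1 * f i) < top" using q1 by (simp add: le_less_trans)
    thus ?thesis unfolding mseq_def by (intro CollectI exI[of _ 1]) simp
  qed
  moreover have "qseq \<phi> w (\<lambda>i. r * f i) = top" if "r > 1" for r
    using form[of r] h(4) that by (simp add: f_def)
  ultimately show ?thesis using q1 by blast
qed

theorem mainTheorem8:
  fixes \<phi> :: "real \<Rightarrow> real"
  assumes "orlicz_fun \<phi>"
  shows "(\<forall>(\<gamma>::ereal) (w::real \<Rightarrow> real). 0 < \<gamma> \<and> weight_fun \<gamma> w \<and> \<not> appr_Delta2 \<gamma> \<phi> \<longrightarrow>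
            (\<exists>f\<in>Mspace \<gamma> \<phi> w. Qfun \<gamma> \<phi> w f \<le> 1 \<and>
               (\<forall>r>(1::real). Qfun \<gamma> \<phi> w (\<lambda>x. r * f x) = top)))
       \<and> (\<forall>w::nat \<Rightarrow> real. weight_seq w \<and> \<not> Delta2_zero \<phi> \<longrightarrow>
            (\<exists>f\<in>mseq \<phi> w. qseq \<phi> w f \<le> 1 \<and>
               (\<forall>r>(1::real). qseq \<phi> w (\<lambda>i. r * f i) = top)))"
  using part_fun[OF assms] part_seq[OF assms] by blast

end
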